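(* Let $(\mathcal{A},\mathbf{m})$ be a multiarrangement in $\mathbb{Q}^l$ with $\mathcal{A}=\{H_1,\dots,H_n\}$, $H_i=\alpha_i^{-1}(0)$, where the $\alpha_i\in\mathbb{Z}[x_1,\dots,x_l]$ are linear forms such that no prime number divides any $\alpha_i$. If $(\mathcal{A},\mathbf{m})$ is free in $\mathbb{Q}^l$ with exponents $(e_1,\dots,e_l)$, then for every sufficiently large prime $p$, the multiarrangement $(\mathcal{A}_p,\mathbf{m})$ is free in $\mathbb{F}_p^l$ with exponents $(e_1,\dots,e_l)$.
   Context: Let $\mathbb{K}$ be a field and $S=\mathbb{K}[x_1,\dots,x_l]$. A multiarrangement $(\mathcal{A},\mathbf{m})$ in $\mathbb{K}^l$ is a finite set $\mathcal{A}=\{H_1,\dots,H_n\}$ of distinct linear hyperplanes $H_i=\alpha_i^{-1}(0)$ together with $\mathbf{m}\colon\mathcal{A}\to\mathbb{Z}_{\ge0}$; $Q(\mathcal{A},\mathbf{m})=\prod_i\alpha_i^{\mathbf{m}(H_i)}$. $D(\mathcal{A},\mathbf{m})=\{\delta=\sum_j f_j\partial_{x_j}: f_j\in S,\ \delta(\alpha_i)\in\alpha_i^{\mathbf{m}(H_i)}S\ \forall i\}$. $(\mathcal{A},\mathbf{m})$ is free with exponents $(e_1,\dots,e_l)$ if $D(\mathcal{A},\mathbf{m})$ is a free $S$-module with a basis of homogeneous derivations (all coefficients homogeneous of the same degree) of polynomial degrees $e_1,\dots,e_l$. For a prime $p$, $\pi_p$ is reduction mod $p$ on $\mathbb{Z}[x_1,\dots,x_l]$;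 $p$ is good if $\pi_p(\alpha_i)\neq\pi_p(\alpha_j)$ for $i\ne j$ (all but finitely many primes are good). For good $p$, $(\mathcal{A}_p,\mathbf{m})$ is the multiarrangement in $\mathbb{F}_p^l$ with hyperplanes $\pi_p(\alpha_i)^{-1}(0)$ of multiplicity $\mathbf{m}(H_i)$. *)

theory Defs
  imports Complex_Main "HOL-Library.Poly_Mapping" "HOL-Computational_Algebra.Primes"
begin

(* Multivariate polynomials: finitely supported maps from monomials (exponent
   vectors nat =>0 nat, variable x_j <-> index j) to coefficients.
   S = K[x_0,...,x_{l-1}] consists of the polynomials using only variables < l. *)
type_synonym 'a mpoly = "(nat \<Rightarrow>\<^sub>0 nat) \<Rightarrow>\<^sub>0 'a"

definition in_vars :: "nat \<Rightarrow> 'a::zero mpoly \<Rightarrow> bool" where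
  "in_vars l P \<longleftrightarrow> (\<forall>mon \<in> Poly_Mapping.keys P. \<forall>v \<in> Poly_Mapping.keys mon. v < l)"

(* P is homogeneous of total degree d (the zero polynomial counts as homogeneous of every degree) *)
definition homog :: "nat \<Rightarrow> 'a::zero mpoly \<Rightarrow> bool" where
  "homog d P \<longleftrightarrow> (\<forall>mon \<in> Poly_Mapping.keys P. (\<Sum>v\<in>Poly_Mapping.keys mon. Poly_Mapping.lookup mon v) = d)"

definition const_poly :: "'a::zero \<Rightarrow> 'a mpoly" where
  "const_poly c = Poly_Mapping.single 0 c"

definition var_poly :: "nat \<Rightarrow> 'a::{zero,one} mpoly" where
  "var_poly j = Poly_Mapping.single (Poly_Mapping.single j 1) 1"

definition lin_form :: "nat \<Rightarrow> (nat \<Rightarrow> 'a::comm_ring_1) \<Rightarrow> 'a mpoly" where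
  "lin_form l a = (\<Sum>j<l. const_poly (a j) * var_poly j)"

(* A derivation  delta = sum_{j<l} f_j d/dx_j  is represented by its coefficient
   family f (f j = 0 for j >= l); polynomial coefficients lie in S. *)
definition is_der :: "nat \<Rightarrow> (nat \<Rightarrow> 'a::zero mpoly) \<Rightarrow> bool" where
  "is_der l f \<longleftrightarrow> (\<forall>j<l. in_vars l (f j)) \<and> (\<forall>j\<ge>l. f j = 0)"

definition der_app :: "nat \<Rightarrow> (nat \<Rightarrow> 'a::comm_ring_1 mpoly) \<Rightarrow> (nat \<Rightarrow> 'a) \<Rightarrow> 'a mpoly" where
  "der_app l f a = (\<Sum>j<l. const_poly (a j) * f j)"

(* Generic setting: coefficients in a commutative ring 'a, and the coefficient field
   K is 'a modulo the ideal described by the predicate z ("is zero in K[x]").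
   For K = Q: 'a = rat and z P <-> P = 0.
   For K = F_p: 'a = int and z P <-> all coefficients of P are divisible by p,
   i.e. K[x] = Z[x] / p Z[x].
   Arrangement: hyperplanes alpha_i = lin_form l (alpha i), i < n, with multiplicities m i. *)

definition D_mod :: "('a::comm_ring_1 mpoly \<Rightarrow> bool) \<Rightarrow> nat \<Rightarrow> nat \<Rightarrow> (nat \<Rightarrow> nat \<Rightarrow> 'a)
    \<Rightarrow> (nat \<Rightarrow> nat) \<Rightarrow> (nat \<Rightarrow> 'a mpoly) set" where
  "D_mod z l n alpha m = {f. is_der l f \<and>
      (\<forall>i<n. \<exists>g. in_vars l g \<and> z (der_app l f (alpha i) - lin_form l (alpha i) ^ m i * g))}"

definition free_mod :: "('a::comm_ring_1 mpoly \<Rightarrow> bool) \<Rightarrow> nat \<Rightarrow> nat \<Rightarrow> (nat \<Rightarrow> nat \<Rightarrow> 'a)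
    \<Rightarrow> (nat \<Rightarrow> nat) \<Rightarrow> (nat \<Rightarrow> nat) \<Rightarrow> bool" where
  "free_mod z l n alpha m e \<longleftrightarrow>
     (\<exists>theta :: nat \<Rightarrow> nat \<Rightarrow> 'a mpoly.
        (\<forall>k<l. theta k \<in> D_mod z l n alpha m \<and> (\<forall>j<l. homog (e k) (theta k j))) \<and>
        (\<forall>f \<in> D_mod z l n alpha m. \<exists>g. (\<forall>k<l. in_vars l (g k)) \<and>
            (\<forall>j<l. z (f j - (\<Sum>k<l. g k * theta k j)))) \<and>
        (\<forall>g. (\<forall>k<l. in_vars l (g k)) \<longrightarrow> (\<forall>j<l. z (\<Sum>k<l. g k * theta k j)) \<longrightarrow>
            (\<forall>k<l. z (g k))))"

definition free_multiarr :: "nat \<Rightarrow> nat \<Rightarrow> (nat \<Rightarrow> nat \<Rightarrow> 'k::field) \<Rightarrow> (nat \<Rightarrow> nat)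
    \<Rightarrow> (nat \<Rightarrow> nat) \<Rightarrow> bool" where
  "free_multiarr l n alpha m e = free_mod (\<lambda>P. P = 0) l n alpha m e"

definition zero_mod :: "nat \<Rightarrow> int mpoly \<Rightarrow> bool" where
  "zero_mod p P \<longleftrightarrow> (\<forall>mon. int p dvd Poly_Mapping.lookup P mon)"

definition free_multiarr_modp :: "nat \<Rightarrow> nat \<Rightarrow> nat \<Rightarrow> (nat \<Rightarrow> nat \<Rightarrow> int) \<Rightarrow> (nat \<Rightarrow> nat)
    \<Rightarrow> (nat \<Rightarrow> nat) \<Rightarrow> bool" where
  "free_multiarr_modp p l n alpha m e = free_mod (zero_mod p) l n alpha m e"

definition good_prime :: "nat \<Rightarrow> nat \<Rightarrow> nat \<Rightarrow> (nat \<Rightarrow> nat \<Rightarrow> int) \<Rightarrow> bool" where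
  "good_prime p l n alpha \<longleftrightarrow>
     (\<forall>i<n. \<forall>i'<n. i \<noteq> i' \<longrightarrow> (\<exists>j<l. \<not> int p dvd (alpha i j - alpha i' j)))"

end

theory Submission
  imports Defs
begin


lemma lookup_const_mult: "Poly_Mapping.lookup (const_poly c * P) k = c * Poly_Mapping.lookup P k"
proof -
  have "const_poly c * P = Poly_Mapping.map ((*) c) P"
    by (simp add: const_poly_def mult_map_scale_conv_mult)
  then show ?thesis by (simp add: map.rep_eq when_def)
qed

lemma mon_shift_iff:
  fixes k q :: "nat \<Rightarrow>\<^sub>0 nat"
  shows "(k = Poly_Mapping.single j 1 + q) \<longleftrightarrow> (0 < Poly_Mapping.lookup k j \<and> q = k - Poly_Mapping.single j 1)"
proof
  assume "k = Poly_Mapping.single j 1 + q"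
  then show "0 < Poly_Mapping.lookup k j \<and> q = k - Poly_Mapping.single j 1"
    by (auto simp: lookup_add lookup_single when_def intro!: poly_mapping_eqI simp: lookup_minus)
next
  assume "0 < Poly_Mapping.lookup k j \<and> q = k - Poly_Mapping.single j 1"
  then show "k = Poly_Mapping.single j 1 + q"
    by (auto simp: lookup_add lookup_single when_def lookup_minus intro!: poly_mapping_eqI)
qed

lemma lookup_var_mult:
  fixes P :: "'a::comm_ring_1 mpoly"
  shows "Poly_Mapping.lookup (var_poly j * P) k =
    (if 0 < Poly_Mapping.lookup k j then Poly_Mapping.lookup P (k - Poly_Mapping.single j 1) else 0)"
proof -
  have "Poly_Mapping.lookup (var_poly j * P) k =
     (\<Sum>q. Poly_Mapping.lookup P q when k = Poly_Mapping.single j 1 + q)"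
    by (simp add: var_poly_def lookup_mult lookup_single when_mult)
  also have "\<dots> = (\<Sum>q. Poly_Mapping.lookup P q when (0 < Poly_Mapping.lookup k j \<and> q = k - Poly_Mapping.single j 1))"
    by (simp only: mon_shift_iff)
  also have "\<dots> = (if 0 < Poly_Mapping.lookup k j then Poly_Mapping.lookup P (k - Poly_Mapping.single j 1) else 0)"
    by (cases "0 < Poly_Mapping.lookup k j") (simp_all add: when_def)
  finally show ?thesis .
qed



lemma update_eq_add_single:
  "a \<notin> Poly_Mapping.keys f \<Longrightarrow> Poly_Mapping.update a b f = f + Poly_Mapping.single a b"
  by (rule poly_mapping_eqI) (auto simp: lookup_update lookup_add lookup_single when_def in_keys_iff)

lemma var_poly_power: "(var_poly v :: 'a::comm_ring_1 mpoly) ^ b = Poly_Mapping.single (Poly_Mapping.single v b) 1"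
proof (induction b)
  case 0
  then show ?case by simp
next
  case (Suc b)
  then show ?case
    by (simp add: var_poly_def mult_single flip: single_add)
qed

lemma poly_induct [case_names zero add cst var]:
  fixes P :: "'a::comm_ring_1 mpoly"
  assumes zero: "\<Phi> 0" and add: "\<And>P Q. \<Phi> P \<Longrightarrow> \<Phi> Q \<Longrightarrow> \<Phi> (P + Q)"
    and cst: "\<And>c. \<Phi> (const_poly c)" and var: "\<And>j P. \<Phi> P \<Longrightarrow> \<Phi> (var_poly j * P)"
  shows "\<Phi> P"
proof -
  have pw: "\<Phi> (var_poly v ^ b * X)" if "\<Phi> X" for v b X
  proof (induction b)
    case 0 then show ?case using that by simp
  next
    case (Suc b)
    then show ?case using var[of "var_poly v ^ b * X" v] by (simp add: mult.assoc)
  qed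
  have sing: "\<Phi> (Poly_Mapping.single a c)" for a c
  proof (induction a arbitrary: c rule: update_induct)
    case const
    then show ?case using cst[of c] by (simp add: const_poly_def)
  next
    case (update f v b)
    have "Poly_Mapping.single (Poly_Mapping.update v b f) c = var_poly v ^ b * Poly_Mapping.single f c"
      using update(1) by (simp add: update_eq_add_single var_poly_power mult_single add.commute)
    then show ?case using pw[OF update(3)] by simp
  qed
  show ?thesis
  proof (induction P rule: update_induct)
    case const then show ?case using zero by simp
  next
    case (update f a b)
    then show ?case using add[OF update(3) sing[of a b]] by (simp add: update_eq_add_single)
  qed
qed



definition mon_ok :: "nat \<Rightarrow> (nat \<Rightarrow>\<^sub>0 nat) \<Rightarrow> bool" where
  "mon_ok l mon \<longleftrightarrow> (\<forall>v \<in> Poly_Mapping.keys mon. v < l)"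

definition trunc :: "nat \<Rightarrow> 'a::comm_ring_1 mpoly \<Rightarrow> 'a mpoly" where
  "trunc l P = Poly_Mapping.mapp (\<lambda>mon c. if mon_ok l mon then c else 0) P"

lemma lookup_trunc: "Poly_Mapping.lookup (trunc l P) k = (if mon_ok l k then Poly_Mapping.lookup P k else 0)"
  by (auto simp: trunc_def lookup_mapp when_def in_keys_iff)

lemma trunc_add: "trunc l (P + Q) = trunc l P + trunc l Q"
  by (rule poly_mapping_eqI) (simp add: lookup_trunc lookup_add)

lemma trunc_diff: "trunc l (P - Q) = trunc l P - trunc l Q"
  by (rule poly_mapping_eqI) (simp add: lookup_trunc lookup_minus)

lemma trunc_zero [simp]: "trunc l 0 = 0"
  by (rule poly_mapping_eqI) (simp add: lookup_trunc)

lemma trunc_const: "trunc l (const_poly c) = const_poly c"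
  by (rule poly_mapping_eqI) (auto simp: lookup_trunc const_poly_def lookup_single when_def mon_ok_def)

lemma trunc_one: "trunc l 1 = 1"
  using trunc_const[of l 1] by (simp add: const_poly_def)

lemma trunc_const_mult: "trunc l (const_poly c * P) = const_poly c * trunc l P"
  by (rule poly_mapping_eqI) (simp add: lookup_trunc lookup_const_mult)

lemma mon_ok_minus:
  assumes "j < l" "0 < Poly_Mapping.lookup k j"
  shows "mon_ok l (k - Poly_Mapping.single j 1) \<longleftrightarrow> mon_ok l k"
  using assms unfolding mon_ok_def
  by (auto simp: in_keys_iff lookup_minus lookup_single when_def split: if_splits)

lemma mon_ok_minus':
  assumes "j < l" "0 < Poly_Mapping.lookup k j"
  shows "mon_ok l (k - Poly_Mapping.single j (Suc 0)) \<longleftrightarrow> mon_ok l k"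
  using mon_ok_minus[OF assms] by simp

lemma trunc_var: "trunc l (var_poly j :: 'a::comm_ring_1 mpoly) = (if j < l then var_poly j else 0)"
  by (rule poly_mapping_eqI) (auto simp: lookup_trunc var_poly_def lookup_single when_def mon_ok_def)

lemma trunc_var_mult: "trunc l (var_poly j * P) = trunc l (var_poly j) * trunc l P"
proof (cases "j < l")
  case True
  show ?thesis
    by (rule poly_mapping_eqI) (auto simp: True trunc_var lookup_trunc lookup_var_mult mon_ok_minus mon_ok_minus')
next
  case False
  have "\<not> mon_ok l k" if "0 < Poly_Mapping.lookup k j" for k
    using that False by (auto simp: mon_ok_def in_keys_iff)
  then show ?thesis
    by (intro poly_mapping_eqI) (auto simp: False trunc_var lookup_trunc lookup_var_mult)
qed

lemma trunc_mult: "trunc l (P * Q) = trunc l P * trunc l Q"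
proof (induction P rule: poly_induct)
  case zero then show ?case by simp
next
  case (add P1 P2) then show ?case by (simp add: distrib_right trunc_add)
next
  case (cst c) then show ?case by (simp add: trunc_const_mult trunc_const)
next
  case (var j P)
  have "trunc l (var_poly j * P * Q) = trunc l (var_poly j * (P * Q))" by (simp add: mult.assoc)
  also have "\<dots> = trunc l (var_poly j) * (trunc l P * trunc l Q)" by (simp add: trunc_var_mult var)
  also have "\<dots> = trunc l (var_poly j * P) * trunc l Q" by (simp add: trunc_var_mult mult.assoc)
  finally show ?case .
qed

lemma trunc_sum: "trunc l (\<Sum>i\<in>A. f i) = (\<Sum>i\<in>A. trunc l (f i))"
  by (induction A rule: infinite_finite_induct) (simp_all add: trunc_add)

lemma trunc_prod: "trunc l (\<Prod>i\<in>A. f i) = (\<Prod>i\<in>A. trunc l (f i))"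
  by (induction A rule: infinite_finite_induct) (simp_all add: trunc_mult trunc_one)

lemma trunc_power: "trunc l (P ^ k) = trunc l P ^ k"
  by (induction k) (simp_all add: trunc_mult trunc_one)

lemma trunc_uminus: "trunc l (- P) = - trunc l P"
  using trunc_diff[of l 0 P] by simp

lemma in_vars_trunc_iff: "in_vars l P \<longleftrightarrow> trunc l P = P"
proof
  assume "in_vars l P"
  then show "trunc l P = P"
    by (intro poly_mapping_eqI) (auto simp: lookup_trunc in_vars_def mon_ok_def in_keys_iff)
next
  assume "trunc l P = P"
  then show "in_vars l P"
    unfolding in_vars_def
    by (metis in_keys_iff lookup_trunc mon_ok_def)
qed

lemma in_vars_trunc: "in_vars l (trunc l P)"
  unfolding in_vars_def by (auto simp: in_keys_iff lookup_trunc mon_ok_def split: if_splits)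

lemma trunc_trunc: "trunc l (trunc l P) = trunc l P"
  using in_vars_trunc in_vars_trunc_iff by blast

lemma trunc_lin_form: "trunc l (lin_form l a) = lin_form l a"
  by (simp add: lin_form_def trunc_sum trunc_mult trunc_const trunc_var)

lemma in_vars_lin_form: "in_vars l (lin_form l a)"
  by (simp add: in_vars_trunc_iff trunc_lin_form)



definition iota :: "int mpoly \<Rightarrow> rat mpoly" where
  "iota P = Poly_Mapping.map of_int P"

lemma lookup_iota: "Poly_Mapping.lookup (iota P) k = of_int (Poly_Mapping.lookup P k)"
  by (simp add: iota_def map.rep_eq when_def)

lemma iota_add: "iota (P + Q) = iota P + iota Q"
  by (rule poly_mapping_eqI) (simp add: lookup_iota lookup_add)

lemma iota_diff: "iota (P - Q) = iota P - iota Q"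
  by (rule poly_mapping_eqI) (simp add: lookup_iota lookup_minus)

lemma iota_zero [simp]: "iota 0 = 0"
  by (rule poly_mapping_eqI) (simp add: lookup_iota)

lemma iota_const: "iota (const_poly c) = const_poly (of_int c)"
  by (rule poly_mapping_eqI) (simp add: lookup_iota const_poly_def lookup_single when_def del: single_of_int)

lemma iota_one: "iota 1 = 1"
  using iota_const[of 1] by (simp add: const_poly_def)

lemma iota_var: "iota (var_poly j) = var_poly j"
  by (rule poly_mapping_eqI) (simp add: lookup_iota var_poly_def lookup_single when_def)

lemma iota_const_mult: "iota (const_poly c * P) = const_poly (of_int c) * iota P"
  by (rule poly_mapping_eqI) (simp add: lookup_iota lookup_const_mult)

lemma iota_var_mult: "iota (var_poly j * P) = var_poly j * iota P"
  by (rule poly_mapping_eqI) (simp add: lookup_iota lookup_var_mult)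

lemma iota_mult: "iota (P * Q) = iota P * iota Q"
proof (induction P rule: poly_induct)
  case zero then show ?case by simp
next
  case (add P1 P2) then show ?case by (simp add: distrib_right iota_add)
next
  case (cst c) then show ?case by (simp add: iota_const_mult iota_const)
next
  case (var j P)
  have "iota (var_poly j * P * Q) = iota (var_poly j * (P * Q))" by (simp add: mult.assoc)
  also have "\<dots> = var_poly j * (iota P * iota Q)" by (simp add: iota_var_mult var)
  also have "\<dots> = iota (var_poly j * P) * iota Q" by (simp add: iota_var_mult mult.assoc)
  finally show ?case .
qed

lemma iota_sum: "iota (\<Sum>i\<in>A. f i) = (\<Sum>i\<in>A. iota (f i))"
  by (induction A rule: infinite_finite_induct) (simp_all add: iota_add)

lemma iota_prod: "iota (\<Prod>i\<in>A. f i) = (\<Prod>i\<in>A. iota (f i))"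
  by (induction A rule: infinite_finite_induct) (simp_all add: iota_mult iota_one)

lemma iota_power: "iota (P ^ k) = iota P ^ k"
  by (induction k) (simp_all add: iota_mult iota_one)

lemma iota_inj: "iota P = iota Q \<Longrightarrow> P = Q"
  by (rule poly_mapping_eqI) (metis lookup_iota of_int_eq_iff)

lemma iota_eq_0_iff: "iota P = 0 \<longleftrightarrow> P = 0"
  using iota_inj iota_zero by metis

lemma keys_iota: "Poly_Mapping.keys (iota P) = Poly_Mapping.keys P"
  by (auto simp: in_keys_iff lookup_iota)

lemma iota_lin_form: "iota (lin_form l a) = lin_form l (\<lambda>j. of_int (a j))"
  by (simp add: lin_form_def iota_sum iota_mult iota_const iota_var)

lemma iota_der_app: "iota (der_app l f a) = der_app l (\<lambda>j. iota (f j)) (\<lambda>j. of_int (a j))"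
  by (simp add: der_app_def iota_sum iota_mult iota_const)

lemma keys_const_mult:
  fixes c :: "'a::field"
  assumes "c \<noteq> 0"
  shows "Poly_Mapping.keys (const_poly c * P) = Poly_Mapping.keys P"
  using assms by (auto simp: in_keys_iff lookup_const_mult)



lemma den_mult_int:
  fixes c :: rat
  shows "of_int (snd (quotient_of c)) * c \<in> \<int>"
proof -
  obtain a b where ab: "quotient_of c = (a, b)" by (cases "quotient_of c")
  then have "c = of_int a / of_int b" "b > 0" using quotient_of_div quotient_of_denom_pos by blast+
  then have "of_int b * c = of_int a" by simp
  then show ?thesis using ab by simp
qed

lemma common_denom:
  assumes "finite F"
  shows "\<exists>d::int. d > 0 \<and> (\<forall>P\<in>F. \<exists>P'. iota P' = const_poly (of_int d) * P)"
proof -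
  define C where "C = (\<Union>P\<in>F. Poly_Mapping.range P)"
  have finC: "finite C" using assms by (simp add: C_def)
  define d where "d = (\<Prod>c\<in>C. snd (quotient_of c))"
  have dpos: "d > 0" unfolding d_def
    by (rule prod_pos) (metis prod.collapse quotient_of_denom_pos)
  have dint: "of_int d * c \<in> \<int>" if "c \<in> C" for c
  proof -
    have "d = snd (quotient_of c) * (\<Prod>c\<in>C - {c}. snd (quotient_of c))"
      unfolding d_def using finC that by (simp add: prod.remove)
    then have "of_int d * c = (of_int (snd (quotient_of c)) * c) * of_int (\<Prod>c\<in>C - {c}. snd (quotient_of c))"
      by simp
    then show ?thesis using den_mult_int[of c] by (metis Ints_mult Ints_of_int)
  qed
  have "\<exists>P'. iota P' = const_poly (of_int d) * P" if "P \<in> F" for P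
  proof
    let ?P' = "Poly_Mapping.map (\<lambda>c. \<lfloor>of_int d * c\<rfloor>) P"
    show "iota ?P' = const_poly (of_int d) * P"
    proof (rule poly_mapping_eqI)
      fix k
      show "Poly_Mapping.lookup (iota ?P') k = Poly_Mapping.lookup (const_poly (of_int d) * P) k"
      proof (cases "Poly_Mapping.lookup P k = 0")
        case True then show ?thesis by (simp add: lookup_iota lookup_const_mult map.rep_eq)
      next
        case False
        then have "Poly_Mapping.lookup P k \<in> C" unfolding C_def using that
          by (auto simp: in_keys_iff intro!: bexI[of _ P] in_keys_lookup_in_range)
        then have "of_int d * Poly_Mapping.lookup P k \<in> \<int>" by (rule dint)
        then show ?thesis using False
          by (simp add: lookup_iota lookup_const_mult map.rep_eq when_def)
      qed
    qed
  qed
  then show ?thesis using dpos by blast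
qed



lemma lead_mult:
  fixes f g :: "('a::{ordered_cancel_comm_monoid_add, linorder}) \<Rightarrow>\<^sub>0 ('b::comm_semiring_1)"
  assumes "f \<noteq> 0" "g \<noteq> 0"
  shows "Poly_Mapping.lookup (f * g) (Max (Poly_Mapping.keys f) + Max (Poly_Mapping.keys g)) =
    Poly_Mapping.lookup f (Max (Poly_Mapping.keys f)) * Poly_Mapping.lookup g (Max (Poly_Mapping.keys g))"
proof -
  define F where "F = Poly_Mapping.keys f"
  define G where "G = Poly_Mapping.keys g"
  have [simp]: "finite F" "finite G" by (simp_all add: F_def G_def)
  have ne: "F \<noteq> {}" "G \<noteq> {}" using assms by (simp_all add: F_def G_def)
  have inF [simp]: "\<And>a. Poly_Mapping.lookup f a \<noteq> 0 \<longleftrightarrow> a \<in> F" by (simp add: F_def in_keys_iff)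
  have inG [simp]: "\<And>a. Poly_Mapping.lookup g a \<noteq> 0 \<longleftrightarrow> a \<in> G" by (simp add: G_def in_keys_iff)
  have z1: "\<And>a. a \<notin> F \<Longrightarrow> Poly_Mapping.lookup f a = 0" and z2: "\<And>a. a \<notin> G \<Longrightarrow> Poly_Mapping.lookup g a = 0"
    using inF inG by blast+
  have [simp]: "Max F \<in> F" "Max G \<in> G" using ne by auto
  have leF: "\<And>a. a \<in> F \<Longrightarrow> a \<le> Max F" and leG: "\<And>b. b \<in> G \<Longrightarrow> b \<le> Max G" by auto
  define q where "q = Max F + Max G"
  have fin1: "finite {a. Poly_Mapping.lookup f a \<noteq> 0}" "finite {a. Poly_Mapping.lookup g a \<noteq> 0}" by simp_all
  have "Poly_Mapping.lookup (f * g) q = (\<Sum>(a, b). Poly_Mapping.lookup f a * Poly_Mapping.lookup g b when q = a + b)"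
    by (simp add: times_poly_mapping.rep_eq prod_fun_unfold_prod[OF fin1])
  also have "\<dots> = (\<Sum>(a, b). Poly_Mapping.lookup f a * Poly_Mapping.lookup g b when q = a + b when a \<in> F \<and> b \<in> G)"
    by (rule Sum_any.cong) (auto simp: split_def when_def q_def z1 z2)
  also have "\<dots> = (\<Sum>(a, b). Poly_Mapping.lookup f a * Poly_Mapping.lookup g b when (Max F, Max G) = (a, b))"
  proof (rule Sum_any.cong)
    fix ab :: "'a \<times> 'a"
    obtain a b where [simp]: "ab = (a, b)" by (cases ab) simp_all
    have *: "a \<in> F \<Longrightarrow> b \<in> G \<Longrightarrow> q = a + b \<Longrightarrow> a = Max F \<and> b = Max G"
    proof -
      assume "a \<in> F" "b \<in> G" "q = a + b"
      then have "a \<le> Max F" "b \<le> Max G" using leF leG by auto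
      show "a = Max F \<and> b = Max G"
      proof (rule ccontr)
        assume "\<not> (a = Max F \<and> b = Max G)"
        then have "a + b < Max F + Max G"
          using \<open>a \<le> Max F\<close> \<open>b \<le> Max G\<close>
          by (metis add_le_less_mono add_less_le_mono order_le_neq_trans)
        then show False using \<open>q = a + b\<close> q_def by simp
      qed
    qed
    show "(case ab of (a, b) \<Rightarrow> Poly_Mapping.lookup f a * Poly_Mapping.lookup g b when q = a + b when a \<in> F \<and> b \<in> G) =
         (case ab of (a, b) \<Rightarrow> Poly_Mapping.lookup f a * Poly_Mapping.lookup g b when (Max F, Max G) = (a, b))"
      using * by (auto simp: when_def q_def)
  qed
  also have "\<dots> = (\<Sum>ab. (case ab of (a, b) \<Rightarrow> Poly_Mapping.lookup f a * Poly_Mapping.lookup g b) when (Max F, Max G) = ab)"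
    unfolding split_def when_def by auto
  also have "\<dots> = Poly_Mapping.lookup f (Max F) * Poly_Mapping.lookup g (Max G)"
    by simp
  finally show ?thesis by (simp add: q_def F_def G_def)
qed



definition pp :: "nat \<Rightarrow> int mpoly" where "pp p = const_poly (int p)"

lemma const_poly_mult: "const_poly a * const_poly b = const_poly (a * b)"
  by (simp add: const_poly_def mult_single)

lemma const_poly_diff: "const_poly a - const_poly b = const_poly (a - b)"
  by (simp add: const_poly_def single_diff)

lemma const_poly_add: "const_poly a + const_poly b = const_poly (a + b)"
  by (simp add: const_poly_def single_add)

lemma const_poly_one: "const_poly 1 = 1"
  by (simp add: const_poly_def)

lemma const_poly_zero [simp]: "const_poly 0 = 0"
  by (simp add: const_poly_def)

lemma lookup_const_0: "Poly_Mapping.lookup (const_poly c) 0 = c"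
  by (simp add: const_poly_def)

lemma zero_mod_iff: "zero_mod p P \<longleftrightarrow> pp p dvd P"
proof
  assume z: "zero_mod p P"
  define Y where "Y = Poly_Mapping.map (\<lambda>c. c div int p) P"
  have "P = pp p * Y"
  proof (rule poly_mapping_eqI)
    fix k
    have "int p dvd Poly_Mapping.lookup P k" using z by (simp add: zero_mod_def)
    then show "Poly_Mapping.lookup P k = Poly_Mapping.lookup (pp p * Y) k"
      by (simp add: pp_def lookup_const_mult Y_def map.rep_eq when_def)
  qed
  then show "pp p dvd P" by (metis dvdI)
next
  assume "pp p dvd P"
  then obtain Y where "P = pp p * Y" by (auto elim: dvdE)
  then show "zero_mod p P" by (simp add: zero_mod_def pp_def lookup_const_mult)
qed

lemma pp_dvd_iff: "pp p dvd P \<longleftrightarrow> (\<forall>k. int p dvd Poly_Mapping.lookup P k)"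
  using zero_mod_iff[of p P] by (simp add: zero_mod_def)

lemma pp_dvd_const: "pp p dvd const_poly c \<longleftrightarrow> int p dvd c"
proof
  assume "pp p dvd const_poly c"
  then show "int p dvd c" using pp_dvd_iff[of p "const_poly c"] lookup_const_0[of c] by metis
next
  assume "int p dvd c"
  then show "pp p dvd const_poly c"
    by (auto simp: pp_dvd_iff const_poly_def lookup_single when_def)
qed

definition red :: "nat \<Rightarrow> int mpoly \<Rightarrow> int mpoly" where
  "red p P = Poly_Mapping.map (\<lambda>c. if int p dvd c then 0 else c) P"

lemma lookup_red: "Poly_Mapping.lookup (red p P) k =
   (if int p dvd Poly_Mapping.lookup P k then 0 else Poly_Mapping.lookup P k)"
  by (simp add: red_def map.rep_eq when_def)

lemma red_diff_dvd: "pp p dvd (P - red p P)"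
  by (auto simp: pp_dvd_iff lookup_minus lookup_red)

lemma red_eq_0: "red p P = 0 \<longleftrightarrow> pp p dvd P"
proof
  assume "red p P = 0"
  then show "pp p dvd P" using red_diff_dvd[of p P] by simp
next
  assume "pp p dvd P"
  then show "red p P = 0"
    by (intro poly_mapping_eqI) (auto simp: lookup_red pp_dvd_iff)
qed

lemma pp_prime:
  assumes p: "prime p" and d: "pp p dvd A * B"
  shows "pp p dvd A \<or> pp p dvd B"
proof (rule ccontr)
  assume "\<not> (pp p dvd A \<or> pp p dvd B)"
  then have nA: "red p A \<noteq> 0" and nB: "red p B \<noteq> 0" by (auto simp: red_eq_0)
  have "A * B - red p A * red p B = A * (B - red p B) + (A - red p A) * red p B"
    by (simp add: algebra_simps)
  moreover have "pp p dvd A * (B - red p B)" using red_diff_dvd[of p B] by (rule dvd_mult)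
  moreover have "pp p dvd (A - red p A) * red p B" using red_diff_dvd[of p A] by (rule dvd_mult2)
  ultimately have "pp p dvd (A * B - red p A * red p B)" by (metis dvd_add)
  from dvd_diff[OF d this] have dd: "pp p dvd red p A * red p B" by simp
  define a where "a = Max (Poly_Mapping.keys (red p A))"
  define b where "b = Max (Poly_Mapping.keys (red p B))"
  have "a \<in> Poly_Mapping.keys (red p A)" using nA by (simp add: a_def)
  then have na: "\<not> int p dvd Poly_Mapping.lookup (red p A) a"
    by (auto simp: in_keys_iff lookup_red split: if_splits)
  have "b \<in> Poly_Mapping.keys (red p B)" using nB by (simp add: b_def)
  then have nb: "\<not> int p dvd Poly_Mapping.lookup (red p B) b"
    by (auto simp: in_keys_iff lookup_red split: if_splits)
  have "Poly_Mapping.lookup (red p A * red p B) (a + b) =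
      Poly_Mapping.lookup (red p A) a * Poly_Mapping.lookup (red p B) b"
    unfolding a_def b_def by (rule lead_mult[OF nA nB])
  moreover have "int p dvd Poly_Mapping.lookup (red p A * red p B) (a + b)"
    using dd by (simp add: pp_dvd_iff)
  ultimately have "int p dvd Poly_Mapping.lookup (red p A) a * Poly_Mapping.lookup (red p B) b" by simp
  moreover have "prime (int p)" using p by simp
  ultimately show False using na nb by (simp add: prime_dvd_mult_iff)
qed

lemma pp_cancel_const:
  assumes "prime p" "\<not> int p dvd c" "pp p dvd const_poly c * X"
  shows "pp p dvd X"
  using pp_prime[OF assms(1,3)] assms(2) pp_dvd_const by blast

lemma unit_mod:
  assumes p: "prime p" and c: "\<not> int p dvd c"
  shows "\<exists>c'. int p dvd (c * c' - 1)"
proof -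
  have "coprime c (int p)"
  proof -
    have "prime (int p)" using p by simp
    then have "coprime (int p) c" using c by (simp add: prime_imp_coprime)
    then show ?thesis by (simp add: coprime_commute)
  qed
  then have "gcd c (int p) = 1" by simp
  then obtain x y where "x * c + y * int p = 1"
    using bezout_int[of c "int p"] by metis
  then have "c * x - 1 = int p * (- y)" by (simp add: algebra_simps)
  then show ?thesis by (metis dvd_triv_left)
qed

lemma unit_mod_poly:
  assumes p: "prime p" and c: "\<not> int p dvd c"
  shows "\<exists>c'. pp p dvd (const_poly c * const_poly c' - 1)"
proof -
  obtain c' where "int p dvd (c * c' - 1)" using unit_mod[OF assms] by blast
  then have "pp p dvd const_poly (c * c' - 1)" by (simp add: pp_dvd_const)
  then show ?thesis by (metis const_poly_mult const_poly_diff const_poly_one)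
qed



lemma lookup_lin_mult:
  "Poly_Mapping.lookup (lin_form l b * S) k =
    (\<Sum>j<l. b j * (if 0 < Poly_Mapping.lookup k j then Poly_Mapping.lookup S (k - Poly_Mapping.single j 1) else 0))"
  unfolding lin_form_def sum_distrib_right lookup_sum 
  by (rule sum.cong) (simp_all only: mult.assoc lookup_const_mult lookup_var_mult)

lemma single1_inj: "Poly_Mapping.single x (Suc 0) = Poly_Mapping.single j (Suc 0) \<longleftrightarrow> x = j"
  by (metis lookup_single_eq lookup_single_not_eq nat.distinct(1))

lemma lookup_lin_form_single:
  assumes "j < l"
  shows "Poly_Mapping.lookup (lin_form l a) (Poly_Mapping.single j 1) = a j"
proof -
  have "Poly_Mapping.lookup (lin_form l a) (Poly_Mapping.single j 1) =
     (\<Sum>j'<l. a j' * Poly_Mapping.lookup (var_poly j') (Poly_Mapping.single j 1))"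
    unfolding lin_form_def lookup_sum by (simp only: lookup_const_mult)
  also have "\<dots> = (\<Sum>j'<l. if j' = j then a j else 0)"
    by (rule sum.cong) (auto simp: var_poly_def lookup_single when_def single1_inj)
  also have "\<dots> = a j" using assms by simp
  finally show ?thesis .
qed

lemma lookup_lin_mult_0: "Poly_Mapping.lookup (lin_form l b * S) 0 = 0"
  unfolding lookup_lin_mult by simp

definition free0 :: "nat \<Rightarrow> 'a::zero mpoly \<Rightarrow> bool" where
  "free0 jj P \<longleftrightarrow> (\<forall>mon \<in> Poly_Mapping.keys P. Poly_Mapping.lookup mon jj = 0)"

lemma free0_zero [simp]: "free0 jj 0"
  by (simp add: free0_def)

lemma free0_add: "free0 jj P \<Longrightarrow> free0 jj Q \<Longrightarrow> free0 jj (P + Q)"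
  unfolding free0_def using keys_add[of P Q] by blast

lemma free0_uminus: "free0 jj (P::'a::ab_group_add mpoly) \<Longrightarrow> free0 jj (- P)"
  unfolding free0_def by simp

lemma free0_diff: "free0 jj (P::'a::ab_group_add mpoly) \<Longrightarrow> free0 jj Q \<Longrightarrow> free0 jj (P - Q)"
  unfolding diff_conv_add_uminus by (intro free0_add free0_uminus)

lemma free0_mult: "free0 jj (P::'a::comm_ring_1 mpoly) \<Longrightarrow> free0 jj Q \<Longrightarrow> free0 jj (P * Q)"
proof -
  assume a: "free0 jj P" "free0 jj Q"
  show ?thesis unfolding free0_def
  proof
    fix mon assume "mon \<in> Poly_Mapping.keys (P * Q)"
    then obtain x y where "x \<in> Poly_Mapping.keys P" "y \<in> Poly_Mapping.keys Q" "mon = x + y"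
      using keys_mult[of P Q] by blast
    then show "Poly_Mapping.lookup mon jj = 0" using a by (simp add: free0_def lookup_add)
  qed
qed

lemma free0_const: "free0 jj (const_poly c)"
  by (simp add: free0_def const_poly_def)

lemma free0_var: "j \<noteq> jj \<Longrightarrow> free0 jj (var_poly j :: 'a::comm_ring_1 mpoly)"
  by (simp add: free0_def var_poly_def lookup_single when_def)

lemma free0_sum: "(\<And>i. i \<in> A \<Longrightarrow> free0 jj (f i :: 'a::comm_ring_1 mpoly)) \<Longrightarrow> free0 jj (\<Sum>i\<in>A. f i)"
  by (induction A rule: infinite_finite_induct) (auto intro: free0_add)

lemma div_unique:
  assumes p: "prime p" and jj: "jj < l" and b: "\<not> int p dvd b jj"
    and P0: "free0 jj P0" and d: "pp p dvd (P0 - lin_form l b * S)"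
  shows "pp p dvd S"
proof (rule ccontr)
  assume nd: "\<not> pp p dvd S"
  define K where "K = {k \<in> Poly_Mapping.keys S. \<not> int p dvd Poly_Mapping.lookup S k}"
  have finK: "finite K" by (simp add: K_def)
  have neK: "K \<noteq> {}"
  proof -
    obtain k where "\<not> int p dvd Poly_Mapping.lookup S k" using nd by (auto simp: pp_dvd_iff)
    then have "k \<in> K" by (auto simp: K_def in_keys_iff)
    then show ?thesis by blast
  qed
  define M where "M = Max ((\<lambda>k. Poly_Mapping.lookup k jj) ` K)"
  obtain ks where ks: "ks \<in> K" "Poly_Mapping.lookup ks jj = M"
  proof -
    have "M \<in> (\<lambda>k. Poly_Mapping.lookup k jj) ` K"
      unfolding M_def using finK neK by (intro Max_in) auto
    then show ?thesis using that by blast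
  qed
  have big: "int p dvd Poly_Mapping.lookup S k" if "Poly_Mapping.lookup k jj > M" for k
  proof (rule ccontr)
    assume "\<not> int p dvd Poly_Mapping.lookup S k"
    then have "k \<in> K" by (auto simp: K_def in_keys_iff)
    then have "Poly_Mapping.lookup k jj \<le> M" unfolding M_def using finK by simp
    then show False using that by simp
  qed
  define mon where "mon = ks + Poly_Mapping.single jj 1"
  have mon_j0: "Poly_Mapping.lookup mon jj = M + 1" by (simp add: mon_def lookup_add ks)
  have mon_sub: "mon - Poly_Mapping.single jj 1 = ks"
    by (rule poly_mapping_eqI) (simp add: mon_def lookup_add lookup_minus)
  define t where "t j = b j * (if 0 < Poly_Mapping.lookup mon j then Poly_Mapping.lookup S (mon - Poly_Mapping.single j 1) else 0)" for j
  have lk: "Poly_Mapping.lookup (lin_form l b * S) mon = (\<Sum>j<l. t j)"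
    unfolding t_def by (rule lookup_lin_mult)
  have "(\<Sum>j<l. t j) = t jj + (\<Sum>j\<in>{..<l} - {jj}. t j)"
    using jj by (simp add: sum.remove)
  moreover have "t jj = b jj * Poly_Mapping.lookup S ks" using mon_sub by (simp add: t_def mon_j0)
  moreover have "int p dvd (\<Sum>j\<in>{..<l} - {jj}. t j)"
  proof (rule dvd_sum)
    fix j assume "j \<in> {..<l} - {jj}"
    then have "j \<noteq> jj" by simp
    show "int p dvd t j"
    proof (cases "0 < Poly_Mapping.lookup mon j")
      case True
      have "Poly_Mapping.lookup (mon - Poly_Mapping.single j 1) jj = M + 1"
        using \<open>j \<noteq> jj\<close> by (simp add: lookup_minus mon_j0 lookup_single when_def)
      then show ?thesis using big[of "mon - Poly_Mapping.single j 1"] by (simp add: t_def True)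
    next
      case False then show ?thesis by (simp add: t_def)
    qed
  qed
  ultimately have c1: "int p dvd (Poly_Mapping.lookup (lin_form l b * S) mon - b jj * Poly_Mapping.lookup S ks)"
    using lk by simp
  have "mon \<notin> Poly_Mapping.keys P0" using P0 mon_j0 by (auto simp: free0_def)
  then have "Poly_Mapping.lookup P0 mon = 0" by (simp add: in_keys_iff)
  moreover have "int p dvd Poly_Mapping.lookup (P0 - lin_form l b * S) mon" using d by (simp add: pp_dvd_iff)
  ultimately have "int p dvd Poly_Mapping.lookup (lin_form l b * S) mon" by (simp add: lookup_minus)
  from dvd_diff[OF this c1] have "int p dvd b jj * Poly_Mapping.lookup S ks" by simp
  moreover have "prime (int p)" using p by simp
  ultimately have "int p dvd b jj \<or> int p dvd Poly_Mapping.lookup S ks" by (simp add: prime_dvd_mult_iff)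
  then show False using b ks(1) by (simp add: K_def)
qed



definition dvdm :: "nat \<Rightarrow> int mpoly \<Rightarrow> int mpoly \<Rightarrow> bool" where
  "dvdm p \<beta> X \<longleftrightarrow> (\<exists>S. pp p dvd (X - \<beta> * S))"

lemma div_exists:
  assumes p: "prime p" and jj: "jj < l" and b: "\<not> int p dvd b jj"
  shows "\<exists>S P0. free0 jj P0 \<and> pp p dvd (P - lin_form l b * S - P0)"
proof (induction P rule: poly_induct)
  case zero
  have "free0 jj 0 \<and> pp p dvd (0 - lin_form l b * 0 - 0)" by simp
  then show ?case by blast
next
  case (add P Q)
  from add(1) obtain S1 P1 where 1: "free0 jj P1" "pp p dvd (P - lin_form l b * S1 - P1)" by blast
  from add(2) obtain S2 P2 where 2: "free0 jj P2" "pp p dvd (Q - lin_form l b * S2 - P2)" by blast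
  have "P + Q - lin_form l b * (S1 + S2) - (P1 + P2) = (P - lin_form l b * S1 - P1) + (Q - lin_form l b * S2 - P2)"
    by (simp add: algebra_simps)
  then have "pp p dvd (P + Q - lin_form l b * (S1 + S2) - (P1 + P2))"
    using dvd_add[OF 1(2) 2(2)] by metis
  moreover have "free0 jj (P1 + P2)" using 1 2 by (simp add: free0_add)
  ultimately show ?case by blast
next
  case (cst c)
  have "free0 jj (const_poly c) \<and> pp p dvd (const_poly c - lin_form l b * 0 - const_poly c)"
    by (simp add: free0_const)
  then show ?case by blast
next
  case (var j P)
  from var obtain S P0 where h: "free0 jj P0" "pp p dvd (P - lin_form l b * S - P0)" by blast
  show ?case
  proof (cases "j = jj")
    case False
    have "var_poly j * P - lin_form l b * (var_poly j * S) - var_poly j * P0 = var_poly j * (P - lin_form l b * S - P0)"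
      by (simp add: algebra_simps)
    then have "pp p dvd (var_poly j * P - lin_form l b * (var_poly j * S) - var_poly j * P0)"
      using dvd_mult[OF h(2), of "var_poly j"] by simp
    moreover have "free0 jj (var_poly j * P0)" using h(1) False by (simp add: free0_mult free0_var)
    ultimately show ?thesis by blast
  next
    case True
    obtain c' where c': "pp p dvd (const_poly (b jj) * const_poly c' - 1)"
      using unit_mod_poly[OF p b] by blast
    define L0 where "L0 = - (\<Sum>j\<in>{..<l} - {jj}. const_poly (c' * b j) * var_poly j)"
    have L0free: "free0 jj L0" unfolding L0_def
      by (intro free0_uminus free0_sum free0_mult free0_const free0_var) auto
    have "const_poly c' * lin_form l b = (\<Sum>j<l. const_poly (c' * b j) * var_poly j)"
      by (simp add: lin_form_def sum_distrib_left mult.assoc[symmetric] const_poly_mult)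
    also have "\<dots> = const_poly (c' * b jj) * var_poly jj + (\<Sum>j\<in>{..<l} - {jj}. const_poly (c' * b j) * var_poly j)"
      using jj by (simp add: sum.remove)
    finally have "var_poly jj - const_poly c' * lin_form l b - L0 = (1 - const_poly (c' * b jj)) * var_poly jj"
      by (simp add: L0_def algebra_simps)
    also have "\<dots> = - ((const_poly (b jj) * const_poly c' - 1) * var_poly jj)"
      by (simp add: const_poly_mult algebra_simps)
    finally have key: "pp p dvd (var_poly jj - const_poly c' * lin_form l b - L0)"
      using dvd_mult2[OF c', of "var_poly jj"] by simp
    have eq: "var_poly jj * P - lin_form l b * (var_poly jj * S + const_poly c' * P0) - L0 * P0 =
       var_poly jj * (P - lin_form l b * S - P0) + (var_poly jj - const_poly c' * lin_form l b - L0) * P0"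
      by (simp add: algebra_simps)
    have "pp p dvd (var_poly jj * P - lin_form l b * (var_poly jj * S + const_poly c' * P0) - L0 * P0)"
      unfolding eq using dvd_add[OF dvd_mult[OF h(2)] dvd_mult2[OF key]] by simp
    moreover have "free0 jj (L0 * P0)" using L0free h(1) by (rule free0_mult)
    ultimately show ?thesis using True by blast
  qed
qed

lemma lin_prime:
  assumes p: "prime p" and jj: "jj < l" and b: "\<not> int p dvd b jj"
    and d: "dvdm p (lin_form l b) (A * B)"
  shows "dvdm p (lin_form l b) A \<or> dvdm p (lin_form l b) B"
proof -
  let ?b = "lin_form l b"
  obtain SA A0 where A: "free0 jj A0" "pp p dvd (A - ?b * SA - A0)" using div_exists[where P=A and b=b and l=l, OF p jj b] by blast
  obtain SB B0 where B: "free0 jj B0" "pp p dvd (B - ?b * SB - B0)" using div_exists[where P=B and b=b and l=l, OF p jj b] by blast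
  obtain T where T: "pp p dvd (A * B - ?b * T)" using d by (auto simp: dvdm_def)
  define EA where "EA = A - ?b * SA - A0"
  define EB where "EB = B - ?b * SB - B0"
  have eq: "A0 * B0 - ?b * (T - SA * B - A0 * SB) = (A * B - ?b * T) - A0 * EB - EA * B"
    by (simp add: EA_def EB_def algebra_simps)
  have "pp p dvd (A0 * B0 - ?b * (T - SA * B - A0 * SB))"
    unfolding eq using dvd_diff[OF dvd_diff[OF T dvd_mult[OF B(2)[folded EB_def], of A0]] dvd_mult2[OF A(2)[folded EA_def], of B]]
    by simp
  moreover have "free0 jj (A0 * B0)" using A(1) B(1) by (rule free0_mult)
  ultimately have X: "pp p dvd (T - SA * B - A0 * SB)" using div_unique[where b=b and jj=jj, OF p jj b] by blast
  have "A0 * B0 = (A0 * B0 - ?b * (T - SA * B - A0 * SB)) + ?b * (T - SA * B - A0 * SB)" by simp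
  then have "pp p dvd (A0 * B0)"
    using dvd_add[OF \<open>pp p dvd (A0 * B0 - ?b * (T - SA * B - A0 * SB))\<close> dvd_mult[OF X, of ?b]] by simp
  then have "pp p dvd A0 \<or> pp p dvd B0" using pp_prime[OF p] by blast
  then show ?thesis
  proof
    assume "pp p dvd A0"
    have "A - ?b * SA = (A - ?b * SA - A0) + A0" by simp
    then have "pp p dvd (A - ?b * SA)" using dvd_add[OF A(2) \<open>pp p dvd A0\<close>] by simp
    then show ?thesis by (auto simp: dvdm_def)
  next
    assume "pp p dvd B0"
    have "B - ?b * SB = (B - ?b * SB - B0) + B0" by simp
    then have "pp p dvd (B - ?b * SB)" using dvd_add[OF B(2) \<open>pp p dvd B0\<close>] by simp
    then show ?thesis by (auto simp: dvdm_def)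
  qed
qed

lemma lin_dvd_prop:
  assumes "dvdm p (lin_form l b) (lin_form l a)"
  shows "\<exists>c. \<forall>j<l. int p dvd (a j - c * b j)"
proof -
  obtain S where S: "pp p dvd (lin_form l a - lin_form l b * S)" using assms by (auto simp: dvdm_def)
  have "int p dvd (a j - Poly_Mapping.lookup S 0 * b j)" if j: "j < l" for j
  proof -
    have "Poly_Mapping.lookup (lin_form l b * S) (Poly_Mapping.single j 1) =
       (\<Sum>j'<l. if j' = j then b j * Poly_Mapping.lookup S 0 else 0)"
      unfolding lookup_lin_mult by (rule sum.cong) (auto simp: lookup_single when_def)
    also have "\<dots> = b j * Poly_Mapping.lookup S 0" using j by simp
    finally have "Poly_Mapping.lookup (lin_form l b * S) (Poly_Mapping.single j 1) = b j * Poly_Mapping.lookup S 0" .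
    moreover have "int p dvd Poly_Mapping.lookup (lin_form l a - lin_form l b * S) (Poly_Mapping.single j 1)"
      using S by (simp add: pp_dvd_iff)
    ultimately show ?thesis using lookup_lin_form_single[OF j, of a] by (simp add: lookup_minus mult.commute)
  qed
  then show ?thesis by blast
qed

lemma not_dvdm_one:
  assumes p: "prime p"
  shows "\<not> dvdm p (lin_form l b) 1"
proof
  assume "dvdm p (lin_form l b) 1"
  then obtain S where S: "pp p dvd (1 - lin_form l b * S)" by (auto simp: dvdm_def)
  then have "int p dvd Poly_Mapping.lookup (1 - lin_form l b * S) 0" by (simp add: pp_dvd_iff)
  then have "int p dvd 1" by (simp add: lookup_minus lookup_lin_mult_0)
  then show False using p by simp
qed

lemma lin_prime':
  assumes p: "prime p" and ex: "\<exists>jj<l. \<not> int p dvd b jj"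
    and d: "dvdm p (lin_form l b) (A * B)"
  shows "dvdm p (lin_form l b) A \<or> dvdm p (lin_form l b) B"
  using ex lin_prime[OF p _ _ d] by blast



lemma pp_not_dvd_lin:
  assumes ex: "\<exists>jj<l. \<not> int p dvd b jj"
  shows "\<not> pp p dvd lin_form l b"
proof
  obtain jj where assms: "jj < l" "\<not> int p dvd b jj" using ex by blast
  assume "pp p dvd lin_form l b"
  then have "int p dvd Poly_Mapping.lookup (lin_form l b) (Poly_Mapping.single jj 1)" by (simp add: pp_dvd_iff)
  then show False using assms lookup_lin_form_single[OF assms(1), of b] by simp
qed

lemma dvdm_refl_mult: "dvdm p \<beta> (\<beta> * S)"
  unfolding dvdm_def by (rule exI[of _ S]) simp

lemma pow_cancel:
  assumes p: "prime p" and ex: "\<exists>jj<l. \<not> int p dvd b jj"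
    and nP: "\<not> dvdm p (lin_form l b) P"
  shows "dvdm p (lin_form l b ^ k) (P * w) \<Longrightarrow> dvdm p (lin_form l b ^ k) w"
proof (induction k arbitrary: w)
  case 0
  show ?case unfolding dvdm_def by (rule exI[of _ w]) simp
next
  case (Suc k)
  let ?b = "lin_form l b"
  obtain S where S: "pp p dvd (P * w - ?b ^ Suc k * S)" using Suc(2) by (auto simp: dvdm_def)
  have "dvdm p ?b (P * w)"
    unfolding dvdm_def by (rule exI[of _ "?b ^ k * S"]) (use S in \<open>simp add: algebra_simps\<close>)
  with lin_prime'[OF p ex] nP have "dvdm p ?b w" by blast
  then obtain w1 where w1: "pp p dvd (w - ?b * w1)" by (auto simp: dvdm_def)
  have eq: "?b * (P * w1 - ?b ^ k * S) = (P * w - ?b ^ Suc k * S) - P * (w - ?b * w1)"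
    by (simp add: algebra_simps)
  have "pp p dvd ?b * (P * w1 - ?b ^ k * S)"
    unfolding eq by (rule dvd_diff[OF S dvd_mult[OF w1]])
  then have "pp p dvd (P * w1 - ?b ^ k * S)"
    using pp_prime[OF p] pp_not_dvd_lin[OF ex] by blast
  then have "dvdm p (?b ^ k) (P * w1)" by (auto simp: dvdm_def)
  from Suc.IH[OF this] obtain S2 where S2: "pp p dvd (w1 - ?b ^ k * S2)" by (auto simp: dvdm_def)
  have eq2: "w - ?b ^ Suc k * S2 = (w - ?b * w1) + ?b * (w1 - ?b ^ k * S2)"
    by (simp add: algebra_simps)
  have "pp p dvd (w - ?b ^ Suc k * S2)"
    unfolding eq2 by (rule dvd_add[OF w1 dvd_mult[OF S2]])
  then show ?case by (auto simp: dvdm_def)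
qed

lemma dvdm_power_base:
  assumes p: "prime p" and ex: "\<exists>jj<l. \<not> int p dvd b jj"
  shows "dvdm p (lin_form l b) (A ^ k) \<Longrightarrow> dvdm p (lin_form l b) A"
proof (induction k)
  case 0
  then show ?case using not_dvdm_one[OF p] by simp
next
  case (Suc k)
  then show ?case using lin_prime'[OF p ex, of A "A ^ k"] by auto
qed

context
  fixes p l n :: nat and alpha :: "nat \<Rightarrow> nat \<Rightarrow> int" and m :: "nat \<Rightarrow> nat"
  assumes p: "prime p"
    and hunit: "\<forall>i<n. \<exists>jj<l. \<not> int p dvd alpha i jj"
    and hnp: "\<forall>i<n. \<forall>i'<n. i \<noteq> i' \<longrightarrow> (\<forall>c. \<not> (\<forall>j<l. int p dvd (alpha i j - c * alpha i' j)))"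
begin

lemma not_dvd_prod:
  assumes t: "t < n" and I: "I \<subseteq> {..<n}" "t \<notin> I"
  shows "\<not> dvdm p (lin_form l (alpha t)) (\<Prod>i\<in>I. lin_form l (alpha i) ^ m i)"
proof -
  have ex: "\<exists>jj<l. \<not> int p dvd alpha t jj" using hunit t by blast
  have "finite I" using I(1) finite_subset by blast
  then show ?thesis using I
  proof (induction I rule: finite_induct)
    case empty
    then show ?case using not_dvdm_one[OF p] by simp
  next
    case (insert i I)
    show ?case
    proof
      assume "dvdm p (lin_form l (alpha t)) (\<Prod>i\<in>insert i I. lin_form l (alpha i) ^ m i)"
      then have "dvdm p (lin_form l (alpha t)) (lin_form l (alpha i) ^ m i * (\<Prod>i\<in>I. lin_form l (alpha i) ^ m i))"
        using insert(1,2) by simp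
      then have "dvdm p (lin_form l (alpha t)) (lin_form l (alpha i) ^ m i) \<or>
          dvdm p (lin_form l (alpha t)) (\<Prod>i\<in>I. lin_form l (alpha i) ^ m i)"
        using lin_prime'[OF p ex] by blast
      then show False
      proof
        assume "dvdm p (lin_form l (alpha t)) (lin_form l (alpha i) ^ m i)"
        then have "dvdm p (lin_form l (alpha t)) (lin_form l (alpha i))"
          using dvdm_power_base[OF p ex] by blast
        then obtain c where "\<forall>j<l. int p dvd (alpha i j - c * alpha t j)" using lin_dvd_prop by blast
        moreover have "i < n" "i \<noteq> t" using insert by auto
        ultimately show False using hnp t by blast
      next
        assume "dvdm p (lin_form l (alpha t)) (\<Prod>i\<in>I. lin_form l (alpha i) ^ m i)"
        then show False using insert by auto
      qed
    qed
  qed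
qed

lemma coprime_prod:
  assumes I: "I \<subseteq> {..<n}"
    and h: "\<forall>i\<in>I. dvdm p (lin_form l (alpha i) ^ m i) u"
  shows "dvdm p (\<Prod>i\<in>I. lin_form l (alpha i) ^ m i) u"
proof -
  have "finite I" using I finite_subset by blast
  then show ?thesis using I h
  proof (induction I rule: finite_induct)
    case empty
    show ?case unfolding dvdm_def by (rule exI[of _ u]) simp
  next
    case (insert t I)
    let ?P = "\<Prod>i\<in>I. lin_form l (alpha i) ^ m i"
    let ?a = "lin_form l (alpha t) ^ m t"
    have t: "t < n" using insert by auto
    have ex: "\<exists>jj<l. \<not> int p dvd alpha t jj" using hunit t by blast
    obtain w where w: "pp p dvd (u - ?P * w)" using insert by (auto simp: dvdm_def)
    obtain S where S: "pp p dvd (u - ?a * S)" using insert by (auto simp: dvdm_def)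
    have eq: "?P * w - ?a * S = (u - ?a * S) - (u - ?P * w)" by simp
    have "pp p dvd (?P * w - ?a * S)" unfolding eq by (rule dvd_diff[OF S w])
    then have "dvdm p ?a (?P * w)" by (auto simp: dvdm_def)
    moreover have "\<not> dvdm p (lin_form l (alpha t)) ?P"
      using not_dvd_prod[OF t] insert by auto
    ultimately have "dvdm p ?a w" using pow_cancel[OF p ex] by blast
    then obtain w2 where w2: "pp p dvd (w - ?a * w2)" by (auto simp: dvdm_def)
    have eq2: "u - (\<Prod>i\<in>insert t I. lin_form l (alpha i) ^ m i) * w2 = (u - ?P * w) + ?P * (w - ?a * w2)"
      using insert(1,2) by (simp add: algebra_simps)
    have "pp p dvd (u - (\<Prod>i\<in>insert t I. lin_form l (alpha i) ^ m i) * w2)"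
      unfolding eq2 by (rule dvd_add[OF w dvd_mult[OF w2]])
    then show ?case by (auto simp: dvdm_def)
  qed
qed

end



lemma sum_if_eq:
  fixes f :: "nat \<Rightarrow> 'a::comm_ring_1"
  assumes "j' < l"
  shows "(\<Sum>j<l. f j * (if j = j' then X else 0)) = f j' * X"
proof -
  have "(\<Sum>j<l. f j * (if j = j' then X else 0)) = (\<Sum>j<l. if j = j' then f j' * X else 0)"
    by (rule sum.cong) auto
  also have "\<dots> = f j' * X" using assms by simp
  finally show ?thesis .
qed

lemma sum_if_eq':
  fixes f :: "nat \<Rightarrow> 'a::comm_ring_1"
  assumes "j' < l"
  shows "(\<Sum>j<l. f j * (if j' = j then X else 0)) = f j' * X"
  using sum_if_eq[OF assms, of f X] by (simp add: eq_commute)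

lemma trunc_pp: "trunc l (pp p * X) = pp p * trunc l X"
  by (simp add: pp_def trunc_mult trunc_const)

lemma pp_dvd_trunc: "pp p dvd X \<Longrightarrow> pp p dvd trunc l X"
  by (metis dvdE dvdI trunc_pp)

lemma trunc_der_app: "is_der l f \<Longrightarrow> trunc l (der_app l f a) = der_app l f a"
  by (simp add: der_app_def trunc_sum trunc_mult trunc_const is_der_def in_vars_trunc_iff)

lemma pp_not_dvd_one: "prime p \<Longrightarrow> \<not> pp p dvd 1"
  using pp_dvd_const[of p 1] prime_gt_1_nat[of p] by (simp add: const_poly_one)

lemma pp_not_dvd_power:
  assumes "prime p" "\<not> pp p dvd A"
  shows "\<not> pp p dvd A ^ k"
proof (induction k)
  case 0 then show ?case using pp_not_dvd_one[OF assms(1)] by simp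
next
  case (Suc k) then show ?case using pp_prime[OF assms(1), of A "A ^ k"] assms(2) by auto
qed

lemma pp_not_dvd_prod:
  assumes "prime p" "\<And>i. i \<in> I \<Longrightarrow> \<not> pp p dvd f i"
  shows "\<not> pp p dvd (\<Prod>i\<in>I. f i)"
  using assms(2)
proof (induction I rule: infinite_finite_induct)
  case (infinite A) then show ?case using pp_not_dvd_one[OF assms(1)] by simp
next
  case empty then show ?case using pp_not_dvd_one[OF assms(1)] by simp
next
  case (insert x F)
  then show ?case using pp_prime[OF assms(1), of "f x" "\<Prod>i\<in>F. f i"] by auto
qed

lemma ring_aux1:
  fixes u a c' s g h D cj :: "'a::comm_ring_1"
  assumes "cj * u = D * g + a * h"
  shows "u - a * (c' * (s * g + h)) = c' * ((D - a * s) * g) - (cj * c' - 1) * u"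
proof -
  have "c' * ((D - a * s) * g) - (cj * c' - 1) * u = c' * (D * g) - c' * (a * s * g) - c' * (cj * u) + u"
    by (simp add: algebra_simps)
  also have "\<dots> = c' * (D * g) - c' * (a * s * g) - c' * (D * g + a * h) + u" using assms by simp
  also have "\<dots> = u - a * (c' * (s * g + h))" by (simp add: algebra_simps)
  finally show ?thesis by simp
qed

lemma modp_free:
  fixes p l n :: nat and alpha :: "nat \<Rightarrow> nat \<Rightarrow> int" and m e :: "nat \<Rightarrow> nat"
    and th G gam :: "nat \<Rightarrow> nat \<Rightarrow> int mpoly" and H :: "nat \<Rightarrow> nat \<Rightarrow> nat \<Rightarrow> nat \<Rightarrow> int mpoly"
    and d :: int
  defines "Q \<equiv> (\<Prod>i<n. lin_form l (alpha i) ^ m i)"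
  assumes p: "prime p"
    and hunit: "\<forall>i<n. \<exists>jj<l. \<not> int p dvd alpha i jj"
    and hnp: "\<forall>i<n. \<forall>i'<n. i \<noteq> i' \<longrightarrow> (\<forall>c. \<not> (\<forall>j<l. int p dvd (alpha i j - c * alpha i' j)))"
    and hd: "\<not> int p dvd d"
    and th_der: "\<forall>k<l. is_der l (th k)"
    and th_hom: "\<forall>k<l. \<forall>j<l. homog (e k) (th k j)"
    and L1: "\<forall>k<l. \<forall>i<n. der_app l (th k) (alpha i) = lin_form l (alpha i) ^ m i * gam k i"
    and L2: "\<forall>j<l. \<forall>j'<l. (\<Sum>k<l. G j k * th k j') = (if j = j' then const_poly d * Q else 0)"
    and L3: "\<forall>k<l. \<forall>k'<l. (\<Sum>j<l. th k j * G j k') = (if k = k' then const_poly d * Q else 0)"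
    and L4: "\<forall>i<n. \<forall>j<l. \<forall>jj<l. \<forall>k<l.
        const_poly (alpha i jj) * G j k - const_poly (alpha i j) * G jj k = lin_form l (alpha i) ^ m i * H i j jj k"
  shows "free_mod (zero_mod p) l n alpha m e"
proof -
  have nQ: "\<not> pp p dvd Q"
    unfolding Q_def
  proof (rule pp_not_dvd_prod[OF p])
    fix i assume "i \<in> {..<n}"
    then have "\<exists>jj<l. \<not> int p dvd alpha i jj" using hunit by simp
    then show "\<not> pp p dvd lin_form l (alpha i) ^ m i"
      by (intro pp_not_dvd_power[OF p] pp_not_dvd_lin)
  qed
  obtain dinv where dinv: "pp p dvd (const_poly d * const_poly dinv - 1)" using unit_mod_poly[OF p hd] by blast
  have mem: "th k \<in> D_mod (zero_mod p) l n alpha m" if k: "k < l" for k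
    unfolding D_mod_def
  proof (intro CollectI conjI allI impI)
    show "is_der l (th k)" using th_der k by blast
    fix i assume i: "i < n"
    have "der_app l (th k) (alpha i) - lin_form l (alpha i) ^ m i * trunc l (gam k i) =
        trunc l (der_app l (th k) (alpha i) - lin_form l (alpha i) ^ m i * gam k i)"
      using th_der k by (simp add: trunc_diff trunc_mult trunc_power trunc_lin_form trunc_der_app)
    also have "\<dots> = 0" using L1 k i by simp
    finally show "\<exists>g. in_vars l g \<and> zero_mod p (der_app l (th k) (alpha i) - lin_form l (alpha i) ^ m i * g)"
      by (intro exI[of _ "trunc l (gam k i)"]) (simp add: in_vars_trunc zero_mod_def)
  qed
  have gen: "\<exists>g. (\<forall>k<l. in_vars l (g k)) \<and> (\<forall>j<l. zero_mod p (f j - (\<Sum>k<l. g k * th k j)))"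
    if f: "f \<in> D_mod (zero_mod p) l n alpha m" for f
  proof -
    have fder: "is_der l f" using f by (simp add: D_mod_def)
    have fs: "\<forall>i<n. \<exists>s. pp p dvd (der_app l f (alpha i) - lin_form l (alpha i) ^ m i * s)"
      using f by (auto simp: D_mod_def zero_mod_iff)
    define u where "u k = (\<Sum>j<l. f j * G j k)" for k
    have loc: "dvdm p (lin_form l (alpha i) ^ m i) (u k)" if i: "i < n" and k: "k < l" for i k
    proof -
      obtain jj where jj: "jj < l" "\<not> int p dvd alpha i jj" using hunit i by blast
      obtain c' where c': "pp p dvd (const_poly (alpha i jj) * const_poly c' - 1)"
        using unit_mod_poly[OF p jj(2)] by blast
      obtain s where s: "pp p dvd (der_app l f (alpha i) - lin_form l (alpha i) ^ m i * s)" using fs i by blast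
      let ?a = "lin_form l (alpha i) ^ m i"
      define R where "R = s * G jj k + (\<Sum>j<l. f j * H i j jj k)"
      have L4': "const_poly (alpha i jj) * G j k = const_poly (alpha i j) * G jj k + ?a * H i j jj k"
        if j: "j < l" for j
      proof -
        have "const_poly (alpha i jj) * G j k - const_poly (alpha i j) * G jj k = ?a * H i j jj k"
          using L4 i jj(1) k j by blast
        then show ?thesis by (metis add.commute diff_eq_eq)
      qed
      have "const_poly (alpha i jj) * u k = (\<Sum>j<l. f j * (const_poly (alpha i jj) * G j k))"
        unfolding u_def sum_distrib_left by (rule sum.cong) (simp_all only: ac_simps)
      also have "\<dots> = (\<Sum>j<l. f j * (const_poly (alpha i j) * G jj k + ?a * H i j jj k))"
        using L4' by (intro sum.cong) auto
      also have "\<dots> = (\<Sum>j<l. const_poly (alpha i j) * f j * G jj k + ?a * (f j * H i j jj k))"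
        by (rule sum.cong) (simp_all add: distrib_left ac_simps)
      also have "\<dots> = (\<Sum>j<l. const_poly (alpha i j) * f j * G jj k) + (\<Sum>j<l. ?a * (f j * H i j jj k))"
        by (rule sum.distrib)
      also have "\<dots> = der_app l f (alpha i) * G jj k + ?a * (\<Sum>j<l. f j * H i j jj k)"
        by (simp only: der_app_def sum_distrib_right sum_distrib_left)
      finally have e1: "const_poly (alpha i jj) * u k =
          der_app l f (alpha i) * G jj k + ?a * (\<Sum>j<l. f j * H i j jj k)" .
      have eq: "u k - ?a * (const_poly c' * R) =
          const_poly c' * ((der_app l f (alpha i) - ?a * s) * G jj k) -
          (const_poly (alpha i jj) * const_poly c' - 1) * u k"
        unfolding R_def by (rule ring_aux1[OF e1])
      have "pp p dvd (u k - ?a * (const_poly c' * R))"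
        unfolding eq by (rule dvd_diff[OF dvd_mult[OF dvd_mult2[OF s]] dvd_mult2[OF c']])
      then show ?thesis by (auto simp: dvdm_def)
    qed
    have "\<forall>k<l. \<exists>w. pp p dvd (u k - Q * w)"
    proof (intro allI impI)
      fix k assume k: "k < l"
      have "dvdm p Q (u k)" unfolding Q_def
        by (rule coprime_prod[OF p hunit hnp]) (auto intro: loc k)
      then show "\<exists>w. pp p dvd (u k - Q * w)" by (simp add: dvdm_def)
    qed
    then obtain w where w: "\<forall>k<l. pp p dvd (u k - Q * w k)" by metis
    define g where "g k = trunc l (const_poly dinv * w k)" for k
    have "zero_mod p (f j' - (\<Sum>k<l. g k * th k j'))" if j': "j' < l" for j'
    proof -
      have "(\<Sum>k<l. u k * th k j') = (\<Sum>k<l. \<Sum>j<l. f j * (G j k * th k j'))"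
        unfolding u_def by (simp add: sum_distrib_right mult.assoc)
      also have "\<dots> = (\<Sum>j<l. \<Sum>k<l. f j * (G j k * th k j'))" by (rule sum.swap)
      also have "\<dots> = (\<Sum>j<l. f j * (\<Sum>k<l. G j k * th k j'))" by (simp add: sum_distrib_left)
      also have "\<dots> = (\<Sum>j<l. f j * (if j = j' then const_poly d * Q else 0))"
        using L2 j' by (intro sum.cong) auto
      also have "\<dots> = f j' * (const_poly d * Q)" by (rule sum_if_eq[OF j'])
      finally have e2: "(\<Sum>k<l. u k * th k j') = f j' * (const_poly d * Q)" .
      have "Q * (const_poly d * f j' - (\<Sum>k<l. w k * th k j')) = (\<Sum>k<l. (u k - Q * w k) * th k j')"
        by (simp add: sum_subtractf left_diff_distrib e2 sum_distrib_left algebra_simps)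
      moreover have "pp p dvd (\<Sum>k<l. (u k - Q * w k) * th k j')"
        using w by (intro dvd_sum) auto
      ultimately have "pp p dvd Q * (const_poly d * f j' - (\<Sum>k<l. w k * th k j'))" by simp
      then have X: "pp p dvd (const_poly d * f j' - (\<Sum>k<l. w k * th k j'))" using pp_prime[OF p] nQ by blast
      have eq: "f j' - (\<Sum>k<l. const_poly dinv * w k * th k j') =
          const_poly dinv * (const_poly d * f j' - (\<Sum>k<l. w k * th k j')) - (const_poly d * const_poly dinv - 1) * f j'"
        by (simp add: sum_distrib_left algebra_simps)
      have Y: "pp p dvd (f j' - (\<Sum>k<l. const_poly dinv * w k * th k j'))"
        unfolding eq by (rule dvd_diff[OF dvd_mult[OF X] dvd_mult2[OF dinv]])
      have "f j' - (\<Sum>k<l. g k * th k j') = trunc l (f j' - (\<Sum>k<l. const_poly dinv * w k * th k j'))"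
        using fder th_der j' by (simp add: g_def trunc_diff trunc_sum trunc_mult is_der_def in_vars_trunc_iff)
      then show ?thesis using pp_dvd_trunc[OF Y] by (simp add: zero_mod_iff)
    qed
    moreover have "\<forall>k<l. in_vars l (g k)" by (simp add: g_def in_vars_trunc)
    ultimately show ?thesis by blast
  qed
  have ind: "\<forall>k<l. zero_mod p (g k)"
    if g: "\<forall>j<l. zero_mod p (\<Sum>k<l. g k * th k j)" for g
  proof (intro allI impI)
    fix k' assume k': "k' < l"
    have "(\<Sum>j<l. (\<Sum>k<l. g k * th k j) * G j k') = (\<Sum>j<l. \<Sum>k<l. g k * (th k j * G j k'))"
      by (simp add: sum_distrib_right mult.assoc)
    also have "\<dots> = (\<Sum>k<l. \<Sum>j<l. g k * (th k j * G j k'))" by (rule sum.swap)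
    also have "\<dots> = (\<Sum>k<l. g k * (\<Sum>j<l. th k j * G j k'))" by (simp add: sum_distrib_left)
    also have "\<dots> = (\<Sum>k<l. g k * (if k = k' then const_poly d * Q else 0))"
      using L3 k' by (intro sum.cong) auto
    also have "\<dots> = g k' * (const_poly d * Q)" by (rule sum_if_eq[OF k'])
    finally have e: "(\<Sum>j<l. (\<Sum>k<l. g k * th k j) * G j k') = const_poly d * (Q * g k')" by (simp add: algebra_simps)
    have "pp p dvd (\<Sum>j<l. (\<Sum>k<l. g k * th k j) * G j k')"
    proof (rule dvd_sum)
      fix j assume "j \<in> {..<l}"
      then show "pp p dvd (\<Sum>k<l. g k * th k j) * G j k'"
        using g by (intro dvd_mult2) (simp add: zero_mod_iff)
    qed
    then have "pp p dvd const_poly d * (Q * g k')" by (simp only: e)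
    then have "pp p dvd Q * g k'" by (rule pp_cancel_const[OF p hd])
    then have "pp p dvd g k'" using pp_prime[OF p] nQ by blast
    then show "zero_mod p (g k')" by (simp add: zero_mod_iff)
  qed
  show ?thesis
    unfolding free_mod_def
    by (rule exI[of _ th]) (use mem th_hom gen ind in blast)
qed



lemma in_vars_mult: "in_vars l (P::'a::comm_ring_1 mpoly) \<Longrightarrow> in_vars l Q \<Longrightarrow> in_vars l (P * Q)"
  by (simp add: in_vars_trunc_iff trunc_mult)
lemma in_vars_add: "in_vars l (P::'a::comm_ring_1 mpoly) \<Longrightarrow> in_vars l Q \<Longrightarrow> in_vars l (P + Q)"
  by (simp add: in_vars_trunc_iff trunc_add)
lemma in_vars_diff: "in_vars l (P::'a::comm_ring_1 mpoly) \<Longrightarrow> in_vars l Q \<Longrightarrow> in_vars l (P - Q)"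
  by (simp add: in_vars_trunc_iff trunc_diff)
lemma in_vars_const: "in_vars l (const_poly c :: 'a::comm_ring_1 mpoly)"
  by (simp add: in_vars_trunc_iff trunc_const)
lemma in_vars_zero: "in_vars l 0"
  by (simp add: in_vars_def)
lemma in_vars_sum: "(\<And>i. i \<in> A \<Longrightarrow> in_vars l (f i :: 'a::comm_ring_1 mpoly)) \<Longrightarrow> in_vars l (\<Sum>i\<in>A. f i)"
  by (simp add: in_vars_trunc_iff trunc_sum)
lemma in_vars_prod: "(\<And>i. i \<in> A \<Longrightarrow> in_vars l (f i :: 'a::comm_ring_1 mpoly)) \<Longrightarrow> in_vars l (\<Prod>i\<in>A. f i)"
  by (simp add: in_vars_trunc_iff trunc_prod)
lemma in_vars_power: "in_vars l (P::'a::comm_ring_1 mpoly) \<Longrightarrow> in_vars l (P ^ k)"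
  by (simp add: in_vars_trunc_iff trunc_power)
lemma in_vars_if: "in_vars l P \<Longrightarrow> in_vars l Q \<Longrightarrow> in_vars l (if b then P else Q)"
  by simp

lemma lin_form_nonzero:
  fixes a :: "nat \<Rightarrow> 'a::comm_ring_1"
  assumes "j < l" "a j \<noteq> 0"
  shows "lin_form l a \<noteq> 0"
  using lookup_lin_form_single[OF assms(1), of a] assms(2) by auto



lemma Q_side:
  fixes l n :: nat and aQ :: "nat \<Rightarrow> nat \<Rightarrow> rat" and m e :: "nat \<Rightarrow> nat"
  defines "QQ \<equiv> (\<Prod>i<n. lin_form l (aQ i) ^ m i)"
  assumes nz: "\<forall>i<n. \<exists>j<l. aQ i j \<noteq> 0"
    and free: "free_mod (\<lambda>P. P = 0) l n aQ m e"
  shows "\<exists>\<theta> G \<gamma> H. (\<forall>k<l. is_der l (\<theta> k)) \<and> (\<forall>k<l. \<forall>j<l. homog (e k) (\<theta> k j)) \<and>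
     (\<forall>k<l. \<forall>i<n. der_app l (\<theta> k) (aQ i) = lin_form l (aQ i) ^ m i * \<gamma> k i) \<and>
     (\<forall>j<l. \<forall>j'<l. (\<Sum>k<l. G j k * \<theta> k j') = (if j = j' then QQ else 0)) \<and>
     (\<forall>k<l. \<forall>k'<l. (\<Sum>j<l. \<theta> k j * G j k') = (if k = k' then QQ else 0)) \<and>
     (\<forall>i<n. \<forall>j<l. \<forall>jj<l. \<forall>k<l. const_poly (aQ i jj) * G j k - const_poly (aQ i j) * G jj k =
        lin_form l (aQ i) ^ m i * H i j jj k)"
proof -
  let ?D = "D_mod (\<lambda>P. P = 0) l n aQ m"
  let ?a = "\<lambda>i. lin_form l (aQ i) ^ m i"
  obtain \<theta> where T1: "\<forall>k<l. \<theta> k \<in> ?D \<and> (\<forall>j<l. homog (e k) (\<theta> k j))"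
    and T2: "\<forall>f\<in>?D. \<exists>g. (\<forall>k<l. in_vars l (g k)) \<and> (\<forall>j<l. f j - (\<Sum>k<l. g k * \<theta> k j) = 0)"
    and T3: "\<forall>g. (\<forall>k<l. in_vars l (g k)) \<longrightarrow> (\<forall>j<l. (\<Sum>k<l. g k * \<theta> k j) = 0) \<longrightarrow> (\<forall>k<l. g k = 0)"
    using free unfolding free_mod_def by blast
  have thder: "is_der l (\<theta> k)" if "k < l" for k using T1 that by (simp add: D_mod_def)
  have thvars: "in_vars l (\<theta> k j)" if "k < l" "j < l" for k j using thder[OF that(1)] that(2) by (simp add: is_der_def)
  have avars: "in_vars l (?a i)" for i by (intro in_vars_power in_vars_lin_form)
  define R where "R i = (\<Prod>i'\<in>{..<n} - {i}. ?a i')" for i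
  have Rvars: "in_vars l (R i)" for i unfolding R_def by (intro in_vars_prod avars)
  have QQvars: "in_vars l QQ" unfolding QQ_def by (intro in_vars_prod avars)
  have QQR: "QQ = ?a i * R i" if "i < n" for i
    unfolding QQ_def R_def using that by (simp add: prod.remove)
  have RR: "R i = ?a i' * (\<Prod>i''\<in>{..<n} - {i} - {i'}. ?a i'')" if "i' < n" "i' \<noteq> i" for i i'
    unfolding R_def using that by (simp add: prod.remove)
  have anz: "?a i \<noteq> 0" if "i < n" for i
    using nz that lin_form_nonzero by (metis power_not_zero)
  have Rnz: "R i \<noteq> 0" for i
    unfolding R_def using anz by (simp add: prod_zero_iff)
  have "\<forall>k<l. \<forall>i<n. \<exists>g. der_app l (\<theta> k) (aQ i) = ?a i * g"
  proof (intro allI impI)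
    fix k i assume "k < l" "i < n"
    then have "\<exists>g. in_vars l g \<and> der_app l (\<theta> k) (aQ i) - ?a i * g = 0" using T1 by (simp add: D_mod_def)
    then show "\<exists>g. der_app l (\<theta> k) (aQ i) = ?a i * g" by auto
  qed
  define \<gamma> where "\<gamma> k i = (SOME g. der_app l (\<theta> k) (aQ i) = ?a i * g)" for k i
  have gam: "\<forall>k<l. \<forall>i<n. der_app l (\<theta> k) (aQ i) = ?a i * \<gamma> k i"
  proof (intro allI impI)
    fix k i assume "k < l" "i < n"
    then have "\<exists>g. der_app l (\<theta> k) (aQ i) = ?a i * g" using \<open>\<forall>k<l. \<forall>i<n. \<exists>g. _\<close> by blast
    then show "der_app l (\<theta> k) (aQ i) = ?a i * \<gamma> k i" unfolding \<gamma>_def by (rule someI_ex)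
  qed
  define \<delta> where "\<delta> (j::nat) = (\<lambda>j'::nat. if j' = j then QQ else 0)" for j
  have dmem: "\<delta> j \<in> ?D" if j: "j < l" for j
    unfolding D_mod_def
  proof (intro CollectI conjI allI impI)
    show "is_der l (\<delta> j)" using j QQvars by (auto simp: is_der_def \<delta>_def in_vars_zero)
    fix i assume i: "i < n"
    have "der_app l (\<delta> j) (aQ i) = (\<Sum>j'<l. if j' = j then const_poly (aQ i j) * QQ else 0)"
      unfolding der_app_def \<delta>_def by (rule sum.cong) auto
    also have "\<dots> = const_poly (aQ i j) * QQ" using j by simp
    also have "\<dots> = ?a i * (const_poly (aQ i j) * R i)" using QQR[OF i] by (simp add: ac_simps)
    finally show "\<exists>g. in_vars l g \<and> der_app l (\<delta> j) (aQ i) - ?a i * g = 0"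
      by (intro exI[of _ "const_poly (aQ i j) * R i"]) (simp add: in_vars_mult in_vars_const Rvars)
  qed
  define G where "G j = (SOME g. (\<forall>k<l. in_vars l (g k)) \<and> (\<forall>j'<l. \<delta> j j' - (\<Sum>k<l. g k * \<theta> k j') = 0))" for j
  have GG: "(\<forall>k<l. in_vars l (G j k)) \<and> (\<forall>j'<l. \<delta> j j' - (\<Sum>k<l. G j k * \<theta> k j') = 0)" if j: "j < l" for j
  proof -
    have "\<exists>g. (\<forall>k<l. in_vars l (g k)) \<and> (\<forall>j'<l. \<delta> j j' - (\<Sum>k<l. g k * \<theta> k j') = 0)"
      using bspec[OF T2 dmem[OF j]] by simp
    then show ?thesis unfolding G_def by (rule someI_ex)
  qed
  have Gv: "\<forall>j<l. \<forall>k<l. in_vars l (G j k)" using GG by blast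
  have GE: "\<forall>j<l. \<forall>j'<l. \<delta> j j' - (\<Sum>k<l. G j k * \<theta> k j') = 0" using GG by blast
  have L2: "(\<Sum>k<l. G j k * \<theta> k j') = (if j = j' then QQ else 0)" if "j < l" "j' < l" for j j'
  proof -
    have "\<delta> j j' - (\<Sum>k<l. G j k * \<theta> k j') = 0" using GE that by blast
    then have "(\<Sum>k<l. G j k * \<theta> k j') = \<delta> j j'" by simp
    then show ?thesis unfolding \<delta>_def by (cases "j = j'") auto
  qed
  have L3: "(\<Sum>j<l. \<theta> k j * G j k') = (if k = k' then QQ else 0)" if k: "k < l" and k': "k' < l" for k k'
  proof -
    define g where "g k' = (\<Sum>j<l. \<theta> k j * G j k') - (if k = k' then QQ else 0)" for k'
    have gv: "\<forall>k'<l. in_vars l (g k')"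
      unfolding g_def using k Gv thvars QQvars
      by (auto intro!: in_vars_diff in_vars_sum in_vars_mult simp: in_vars_zero)
    have "(\<Sum>k'<l. g k' * \<theta> k' j'') = 0" if j'': "j'' < l" for j''
    proof -
      have "(\<Sum>k'<l. g k' * \<theta> k' j'') =
          (\<Sum>k'<l. (\<Sum>j<l. \<theta> k j * G j k') * \<theta> k' j'') - (\<Sum>k'<l. (if k = k' then QQ else 0) * \<theta> k' j'')"
        unfolding g_def by (simp add: left_diff_distrib sum_subtractf)
      also have "(\<Sum>k'<l. (\<Sum>j<l. \<theta> k j * G j k') * \<theta> k' j'') = (\<Sum>k'<l. \<Sum>j<l. \<theta> k j * (G j k' * \<theta> k' j''))"
        by (simp add: sum_distrib_right mult.assoc)
      also have "\<dots> = (\<Sum>j<l. \<Sum>k'<l. \<theta> k j * (G j k' * \<theta> k' j''))" by (rule sum.swap)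
      also have "\<dots> = (\<Sum>j<l. \<theta> k j * (\<Sum>k'<l. G j k' * \<theta> k' j''))" by (simp add: sum_distrib_left)
      also have "\<dots> = (\<Sum>j<l. \<theta> k j * (if j = j'' then QQ else 0))"
        using L2 j'' by (intro sum.cong) auto
      also have "\<dots> = \<theta> k j'' * QQ" by (rule sum_if_eq[OF j''])
      also have "(\<Sum>k'<l. (if k = k' then QQ else 0) * \<theta> k' j'') = (\<Sum>k'<l. \<theta> k' j'' * (if k = k' then QQ else 0))"
        by (simp add: mult.commute)
      also have "\<dots> = \<theta> k j'' * QQ" by (rule sum_if_eq'[OF k])
      finally show ?thesis by simp
    qed
    then have "\<forall>k'<l. g k' = 0" using T3 gv by blast
    then show ?thesis using k' by (simp add: g_def)
  qed
  have W4: "\<exists>h. const_poly (aQ i jj) * G j k - const_poly (aQ i j) * G jj k = ?a i * h"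
    if i: "i < n" and j: "j < l" and jj: "jj < l" and k: "k < l" for i j jj k
  proof -
    define \<psi> where "\<psi> j' = (if j' = j then const_poly (aQ i jj) else 0) - (if j' = jj then const_poly (aQ i j) else 0)" for j'
    define \<phi> where "\<phi> j' = R i * \<psi> j'" for j'
    have sumpsi: "(\<Sum>j'<l. X j' * \<psi> j') = X j * const_poly (aQ i jj) - X jj * const_poly (aQ i j)" for X
    proof -
      have "(\<Sum>j'<l. X j' * \<psi> j') = (\<Sum>j'<l. X j' * (if j' = j then const_poly (aQ i jj) else 0)) -
          (\<Sum>j'<l. X j' * (if j' = jj then const_poly (aQ i j) else 0))"
        unfolding \<psi>_def by (simp add: right_diff_distrib sum_subtractf)
      also have "\<dots> = X j * const_poly (aQ i jj) - X jj * const_poly (aQ i j)"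
        by (simp only: sum_if_eq[OF j] sum_if_eq[OF jj])
      finally show ?thesis .
    qed
    have der: "der_app l \<phi> (aQ i') = R i * (const_poly (aQ i' j) * const_poly (aQ i jj) - const_poly (aQ i' jj) * const_poly (aQ i j))" for i'
    proof -
      have "der_app l \<phi> (aQ i') = R i * (\<Sum>j'<l. const_poly (aQ i' j') * \<psi> j')"
        unfolding der_app_def \<phi>_def sum_distrib_left by (rule sum.cong) (simp_all only: ac_simps)
      then show ?thesis by (simp only: sumpsi)
    qed
    have psivars: "in_vars l (\<psi> j')" for j'
      unfolding \<psi>_def by (intro in_vars_diff) (simp_all add: in_vars_const in_vars_zero)
    have pmem: "\<phi> \<in> ?D"
      unfolding D_mod_def
    proof (intro CollectI conjI allI impI)
      have "\<phi> j' = 0" if "l \<le> j'" for j' using that j jj by (simp add: \<phi>_def \<psi>_def)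
      moreover have "in_vars l (\<phi> j')" for j' unfolding \<phi>_def by (rule in_vars_mult[OF Rvars psivars])
      ultimately show "is_der l \<phi>" unfolding is_der_def by blast
      fix i' assume i': "i' < n"
      show "\<exists>g. in_vars l g \<and> der_app l \<phi> (aQ i') - ?a i' * g = 0"
      proof (cases "i' = i")
        case True
        then have "der_app l \<phi> (aQ i') = 0" by (simp add: der mult.commute)
        then show ?thesis by (intro exI[of _ 0]) (simp add: in_vars_zero)
      next
        case False
        let ?g = "(\<Prod>i''\<in>{..<n} - {i} - {i'}. ?a i'') * (const_poly (aQ i' j) * const_poly (aQ i jj) - const_poly (aQ i' jj) * const_poly (aQ i j))"
        have "der_app l \<phi> (aQ i') = ?a i' * ?g" unfolding der RR[OF i' False] by (simp only: ac_simps)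
        moreover have "in_vars l ?g"
          by (intro in_vars_mult in_vars_prod avars in_vars_const in_vars_diff)
        ultimately show ?thesis by (intro exI[of _ ?g]) simp
      qed
    qed
    obtain h where hE: "\<forall>j'<l. \<phi> j' - (\<Sum>k<l. h k * \<theta> k j') = 0"
      using bspec[OF T2 pmem] by blast
    have "(\<Sum>j'<l. \<phi> j' * G j' k) = (\<Sum>j'<l. (\<Sum>k'<l. h k' * \<theta> k' j') * G j' k)"
    proof (rule sum.cong)
      fix j' assume "j' \<in> {..<l}"
      then have "\<phi> j' - (\<Sum>k<l. h k * \<theta> k j') = 0" using hE by simp
      then show "\<phi> j' * G j' k = (\<Sum>k'<l. h k' * \<theta> k' j') * G j' k" by simp
    qed simp
    also have "\<dots> = (\<Sum>j'<l. \<Sum>k'<l. h k' * (\<theta> k' j' * G j' k))"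
      by (simp add: sum_distrib_right mult.assoc)
    also have "\<dots> = (\<Sum>k'<l. \<Sum>j'<l. h k' * (\<theta> k' j' * G j' k))" by (rule sum.swap)
    also have "\<dots> = (\<Sum>k'<l. h k' * (\<Sum>j'<l. \<theta> k' j' * G j' k))" by (simp add: sum_distrib_left)
    also have "\<dots> = (\<Sum>k'<l. h k' * (if k' = k then QQ else 0))"
      using L3 k by (intro sum.cong) auto
    also have "\<dots> = h k * QQ" by (rule sum_if_eq[OF k])
    finally have e1: "(\<Sum>j'<l. \<phi> j' * G j' k) = h k * QQ" .
    have "(\<Sum>j'<l. \<phi> j' * G j' k) = R i * (\<Sum>j'<l. G j' k * \<psi> j')"
      unfolding \<phi>_def sum_distrib_left by (rule sum.cong) (simp_all only: ac_simps)
    also have "\<dots> = R i * (const_poly (aQ i jj) * G j k - const_poly (aQ i j) * G jj k)"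
      using sumpsi[of "\<lambda>j'. G j' k"] by (simp add: mult.commute)
    finally have "R i * (const_poly (aQ i jj) * G j k - const_poly (aQ i j) * G jj k) = R i * (?a i * h k)"
      using e1 QQR[OF i] by (simp only: ac_simps)
    then have "const_poly (aQ i jj) * G j k - const_poly (aQ i j) * G jj k = ?a i * h k"
      using Rnz[of i] by simp
    then show ?thesis by blast
  qed
  define H where "H i j jj k = (SOME h. const_poly (aQ i jj) * G j k - const_poly (aQ i j) * G jj k = ?a i * h)" for i j jj k
  have H: "\<forall>i<n. \<forall>j<l. \<forall>jj<l. \<forall>k<l. const_poly (aQ i jj) * G j k - const_poly (aQ i j) * G jj k = ?a i * H i j jj k"
  proof (intro allI impI)
    fix i j jj k assume "i < n" "j < l" "jj < l" "k < l"
    then show "const_poly (aQ i jj) * G j k - const_poly (aQ i j) * G jj k = ?a i * H i j jj k"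
      unfolding H_def by (rule someI_ex[OF W4])
  qed
  have hom: "\<forall>k<l. \<forall>j<l. homog (e k) (\<theta> k j)" using T1 by blast
  have L2': "\<forall>j<l. \<forall>j'<l. (\<Sum>k<l. G j k * \<theta> k j') = (if j = j' then QQ else 0)" using L2 by blast
  have L3': "\<forall>k<l. \<forall>k'<l. (\<Sum>j<l. \<theta> k j * G j k') = (if k = k' then QQ else 0)" using L3 by blast
  have thder': "\<forall>k<l. is_der l (\<theta> k)" using thder by blast
  show ?thesis
    by (rule exI[of _ \<theta>], rule exI[of _ G], rule exI[of _ \<gamma>], rule exI[of _ H])
      (intro conjI thder' hom gam L2' L3' H)
qed



lemma finite_bound:
  assumes "finite A" "\<forall>x\<in>A. \<exists>N::nat. \<forall>p>N. P x p"
  shows "\<exists>N. \<forall>x\<in>A. \<forall>p>N. P x p"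
  using assms
proof (induction A rule: finite_induct)
  case empty then show ?case by simp
next
  case (insert a A)
  then obtain N1 where N1: "\<forall>x\<in>A. \<forall>p>N1. P x p" by auto
  obtain N2 where N2: "\<forall>p>N2. P a p" using insert by auto
  show ?case
    by (rule exI[of _ "max N1 N2"]) (use N1 N2 in auto)
qed

lemma small_not_dvd:
  fixes x :: int
  assumes "x \<noteq> 0" "p > nat \<bar>x\<bar>"
  shows "\<not> int p dvd x"
proof
  assume "int p dvd x"
  then have "\<bar>int p\<bar> \<le> \<bar>x\<bar>" using dvd_imp_le_int assms(1) by blast
  then show False using assms(2) by linarith
qed

lemma keys_lift:
  assumes "iota P' = const_poly (of_int d) * P" "d \<noteq> 0"
  shows "Poly_Mapping.keys P' = Poly_Mapping.keys P"
proof -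
  have "Poly_Mapping.keys P' = Poly_Mapping.keys (iota P')" by (simp add: keys_iota)
  also have "\<dots> = Poly_Mapping.keys P" using assms by (simp add: keys_const_mult)
  finally show ?thesis .
qed



lemma pair_bound:
  fixes alpha :: "nat \<Rightarrow> nat \<Rightarrow> int"
  assumes nz: "\<exists>j2<l. alpha i' j2 \<noteq> 0"
    and dh: "\<not> (\<exists>c::rat. \<forall>j<l. of_int (alpha i j) = c * of_int (alpha i' j))"
  shows "\<exists>N::nat. \<forall>p>N. (\<exists>j<l. \<not> int p dvd (alpha i j - alpha i' j)) \<and>
     (\<forall>c. \<not> (\<forall>j<l. int p dvd (alpha i j - c * alpha i' j)))"
proof -
  obtain j0 where j0: "j0 < l" "alpha i j0 \<noteq> alpha i' j0"
    using dh[unfolded not_ex] by (metis mult_1 of_int_eq_iff)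
  obtain j2 where j2: "j2 < l" "alpha i' j2 \<noteq> 0" using nz by blast
  define c0 :: rat where "c0 = of_int (alpha i j2) / of_int (alpha i' j2)"
  obtain j1 where j1: "j1 < l" "of_int (alpha i j1) \<noteq> c0 * of_int (alpha i' j1)"
    using dh by blast
  define M where "M = alpha i j1 * alpha i' j2 - alpha i j2 * alpha i' j1"
  have Mnz: "M \<noteq> 0"
  proof
    assume "M = 0"
    then have "rat_of_int (alpha i j1) * of_int (alpha i' j2) = of_int (alpha i j2) * of_int (alpha i' j1)"
      unfolding M_def by (metis eq_iff_diff_eq_0 of_int_eq_iff of_int_mult)
    then have "rat_of_int (alpha i j1) = c0 * of_int (alpha i' j1)"
      using j2(2) unfolding c0_def by (simp add: field_simps)
    then show False using j1(2) by simp
  qed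
  define D where "D = alpha i j0 - alpha i' j0"
  have Dnz: "D \<noteq> 0" using j0 by (simp add: D_def)
  have A: "\<exists>j<l. \<not> int p dvd (alpha i j - alpha i' j)" if p: "p > nat \<bar>M\<bar> + nat \<bar>D\<bar>" for p :: nat
    using small_not_dvd[OF Dnz, of p] p j0(1) unfolding D_def by auto
  have B: "\<not> (\<forall>j<l. int p dvd (alpha i j - c * alpha i' j))" if p: "p > nat \<bar>M\<bar> + nat \<bar>D\<bar>" for p :: nat and c
  proof
    assume h: "\<forall>j<l. int p dvd (alpha i j - c * alpha i' j)"
    have "M = (alpha i j1 - c * alpha i' j1) * alpha i' j2 - (alpha i j2 - c * alpha i' j2) * alpha i' j1"
      unfolding M_def by (simp add: algebra_simps)
    moreover have "int p dvd (alpha i j1 - c * alpha i' j1) * alpha i' j2" using h j1(1) by simp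
    moreover have "int p dvd (alpha i j2 - c * alpha i' j2) * alpha i' j1" using h j2(1) by simp
    ultimately have "int p dvd M" by (metis dvd_diff)
    then show False using small_not_dvd[OF Mnz, of p] p by simp
  qed
  show ?thesis using A B by blast
qed



theorem corollary3p4:
  fixes l n :: nat
    and alpha :: "nat \<Rightarrow> nat \<Rightarrow> int"
    and m e :: "nat \<Rightarrow> nat"
  assumes primitive: "\<forall>i<n. \<forall>q::nat. prime q \<longrightarrow> \<not> (\<forall>j<l. int q dvd alpha i j)"
    and distinct_hyps: "\<forall>i<n. \<forall>i'<n. i \<noteq> i' \<longrightarrow>
           \<not> (\<exists>c::rat. \<forall>j<l. of_int (alpha i j) = c * of_int (alpha i' j))"
    and free_Q: "free_multiarr l n (\<lambda>i j. (of_int (alpha i j) :: rat)) m e"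
  shows "\<exists>N. \<forall>p::nat. prime p \<and> p > N \<longrightarrow>
           good_prime p l n alpha \<and> free_multiarr_modp p l n alpha m e"
proof -
  define aQ where "aQ = (\<lambda>i j. (of_int (alpha i j) :: rat))"
  have nzint: "\<exists>j<l. alpha i j \<noteq> 0" if i: "i < n" for i
  proof (rule ccontr)
    assume "\<not> (\<exists>j<l. alpha i j \<noteq> 0)"
    then have "\<forall>j<l. int 2 dvd alpha i j" by auto
    moreover have "prime (2::nat)" by simp
    ultimately show False using primitive i by blast
  qed
  have nz: "\<forall>i<n. \<exists>j<l. aQ i j \<noteq> 0" using nzint by (simp add: aQ_def)
  have freeQ': "free_mod (\<lambda>P. P = 0) l n aQ m e"
    using free_Q unfolding free_multiarr_def aQ_def .
  define QQ where "QQ = (\<Prod>i<n. lin_form l (aQ i) ^ m i)"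
  have ex: "\<exists>\<theta> G \<gamma> H. (\<forall>k<l. is_der l (\<theta> k)) \<and> (\<forall>k<l. \<forall>j<l. homog (e k) (\<theta> k j)) \<and>
     (\<forall>k<l. \<forall>i<n. der_app l (\<theta> k) (aQ i) = lin_form l (aQ i) ^ m i * \<gamma> k i) \<and>
     (\<forall>j<l. \<forall>j'<l. (\<Sum>k<l. G j k * \<theta> k j') = (if j = j' then QQ else 0)) \<and>
     (\<forall>k<l. \<forall>k'<l. (\<Sum>j<l. \<theta> k j * G j k') = (if k = k' then QQ else 0)) \<and>
     (\<forall>i<n. \<forall>j<l. \<forall>jj<l. \<forall>k<l. const_poly (aQ i jj) * G j k - const_poly (aQ i j) * G jj k =
        lin_form l (aQ i) ^ m i * H i j jj k)"
    unfolding QQ_def by (rule Q_side[OF nz freeQ'])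
  then obtain \<theta> G \<gamma> H where all: "(\<forall>k<l. is_der l (\<theta> k)) \<and> (\<forall>k<l. \<forall>j<l. homog (e k) (\<theta> k j)) \<and>
     (\<forall>k<l. \<forall>i<n. der_app l (\<theta> k) (aQ i) = lin_form l (aQ i) ^ m i * \<gamma> k i) \<and>
     (\<forall>j<l. \<forall>j'<l. (\<Sum>k<l. G j k * \<theta> k j') = (if j = j' then QQ else 0)) \<and>
     (\<forall>k<l. \<forall>k'<l. (\<Sum>j<l. \<theta> k j * G j k') = (if k = k' then QQ else 0)) \<and>
     (\<forall>i<n. \<forall>j<l. \<forall>jj<l. \<forall>k<l. const_poly (aQ i jj) * G j k - const_poly (aQ i j) * G jj k =
        lin_form l (aQ i) ^ m i * H i j jj k)"
    by (elim exE) (rule that, assumption)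
  have Q1: "\<forall>k<l. is_der l (\<theta> k)" using all by (rule conjunct1)
  have Q2: "\<forall>k<l. \<forall>j<l. homog (e k) (\<theta> k j)" using all by (elim conjE)
  have Q3: "\<forall>k<l. \<forall>i<n. der_app l (\<theta> k) (aQ i) = lin_form l (aQ i) ^ m i * \<gamma> k i" using all by (elim conjE)
  have Q4: "\<forall>j<l. \<forall>j'<l. (\<Sum>k<l. G j k * \<theta> k j') = (if j = j' then QQ else 0)" using all by (elim conjE)
  have Q5: "\<forall>k<l. \<forall>k'<l. (\<Sum>j<l. \<theta> k j * G j k') = (if k = k' then QQ else 0)" using all by (elim conjE)
  have Q6: "\<forall>i<n. \<forall>j<l. \<forall>jj<l. \<forall>k<l. const_poly (aQ i jj) * G j k - const_poly (aQ i j) * G jj k =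
        lin_form l (aQ i) ^ m i * H i j jj k" using all by (elim conjE)
  define F where "F = ((\<lambda>(k, j). \<theta> k j) ` ({..<l} \<times> {..<l})) \<union> ((\<lambda>(j, k). G j k) ` ({..<l} \<times> {..<l})) \<union>
      ((\<lambda>(k, i). \<gamma> k i) ` ({..<l} \<times> {..<n})) \<union>
      ((\<lambda>(i, j, jj, k). H i j jj k) ` ({..<n} \<times> {..<l} \<times> {..<l} \<times> {..<l}))"
  have finF: "finite F" unfolding F_def by simp
  obtain d where dpos: "d > 0" and dF: "\<forall>P\<in>F. \<exists>P'. iota P' = const_poly (of_int d) * P"
    using common_denom[OF finF] by blast
  define cd :: "rat mpoly" where "cd = const_poly (of_int d)"
  define lift where "lift P = (SOME P'. iota P' = cd * P)" for P
  have lift: "iota (lift P) = cd * P" if "P \<in> F" for P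
    unfolding lift_def cd_def using bspec[OF dF that] by (rule someI_ex)
  have memt: "\<theta> k j \<in> F" if "k < l" "j < l" for k j
  proof -
    have "\<theta> k j \<in> (\<lambda>(k, j). \<theta> k j) ` ({..<l} \<times> {..<l})" using that by (intro image_eqI[of _ _ "(k, j)"]) auto
    then show ?thesis unfolding F_def by blast
  qed
  have memG: "G j k \<in> F" if "j < l" "k < l" for j k
  proof -
    have "G j k \<in> (\<lambda>(j, k). G j k) ` ({..<l} \<times> {..<l})" using that by (intro image_eqI[of _ _ "(j, k)"]) auto
    then show ?thesis unfolding F_def by blast
  qed
  have memg: "\<gamma> k i \<in> F" if "k < l" "i < n" for k i
  proof -
    have "\<gamma> k i \<in> (\<lambda>(k, i). \<gamma> k i) ` ({..<l} \<times> {..<n})" using that by (intro image_eqI[of _ _ "(k, i)"]) auto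
    then show ?thesis unfolding F_def by blast
  qed
  have memH: "H i j jj k \<in> F" if "i < n" "j < l" "jj < l" "k < l" for i j jj k
  proof -
    have "H i j jj k \<in> (\<lambda>(i, j, jj, k). H i j jj k) ` ({..<n} \<times> {..<l} \<times> {..<l} \<times> {..<l})"
      using that by (intro image_eqI[of _ _ "(i, j, jj, k)"]) auto
    then show ?thesis unfolding F_def by blast
  qed
  define th where "th k j = (if j < l then lift (\<theta> k j) else 0)" for k j
  define G' where "G' j k = lift (G j k)" for j k
  define gam' where "gam' k i = lift (\<gamma> k i)" for k i
  define H' where "H' i j jj k = lift (H i j jj k)" for i j jj k
  have ith: "iota (th k j) = cd * \<theta> k j" if "k < l" "j < l" for k j
    unfolding th_def using that lift[OF memt[OF that]] by simp
  have ith0: "th k j = 0" if "\<not> j < l" for k j using that by (simp add: th_def)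
  have iG: "iota (G' j k) = cd * G j k" if "j < l" "k < l" for j k
    unfolding G'_def using lift[OF memG[OF that]] .
  have igam: "iota (gam' k i) = cd * \<gamma> k i" if "k < l" "i < n" for k i
    unfolding gam'_def using lift[OF memg[OF that]] .
  have iH: "iota (H' i j jj k) = cd * H i j jj k" if "i < n" "j < l" "jj < l" "k < l" for i j jj k
    unfolding H'_def using lift[OF memH[OF that]] .
  have ialpha: "iota (lin_form l (alpha i)) = lin_form l (aQ i)" for i
    by (simp add: iota_lin_form aQ_def)
  define Q' where "Q' = (\<Prod>i<n. lin_form l (alpha i) ^ m i)"
  have iQ: "iota Q' = QQ" unfolding Q'_def QQ_def by (simp add: iota_prod iota_power ialpha)
  have dnz: "d \<noteq> 0" using dpos by simp
  have keys_th: "Poly_Mapping.keys (th k j) = Poly_Mapping.keys (\<theta> k j)" if "k < l" "j < l" for k j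
    using keys_lift[OF ith[OF that, unfolded cd_def] dnz] .
  have th_der: "\<forall>k<l. is_der l (th k)"
  proof (intro allI impI)
    fix k assume k: "k < l"
    have "in_vars l (th k j)" if j: "j < l" for j
    proof -
      have "in_vars l (\<theta> k j)" using Q1 k j by (simp add: is_der_def)
      then show ?thesis unfolding in_vars_def keys_th[OF k j] .
    qed
    moreover have "\<forall>j\<ge>l. th k j = 0" using ith0 by simp
    ultimately show "is_der l (th k)" unfolding is_der_def by blast
  qed
  have th_hom: "\<forall>k<l. \<forall>j<l. homog (e k) (th k j)"
  proof (intro allI impI)
    fix k j assume k: "k < l" and j: "j < l"
    have "homog (e k) (\<theta> k j)" using Q2 k j by blast
    then show "homog (e k) (th k j)" unfolding homog_def keys_th[OF k j] .
  qed
  have cdcd: "const_poly (of_int (d * d)) = cd * cd" by (simp add: cd_def const_poly_mult)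
  have L1: "\<forall>k<l. \<forall>i<n. der_app l (th k) (alpha i) = lin_form l (alpha i) ^ m i * gam' k i"
  proof (intro allI impI)
    fix k i assume k: "k < l" and i: "i < n"
    have "iota (der_app l (th k) (alpha i)) = (\<Sum>j<l. const_poly (aQ i j) * iota (th k j))"
      by (simp only: iota_der_app) (simp add: der_app_def aQ_def)
    also have "\<dots> = (\<Sum>j<l. cd * (const_poly (aQ i j) * \<theta> k j))"
      using ith k by (intro sum.cong) (simp_all add: ac_simps)
    also have "\<dots> = cd * der_app l (\<theta> k) (aQ i)" by (simp add: der_app_def sum_distrib_left)
    also have "\<dots> = iota (lin_form l (alpha i) ^ m i * gam' k i)"
      using Q3 k i by (simp add: iota_mult iota_power ialpha igam ac_simps)
    finally show "der_app l (th k) (alpha i) = lin_form l (alpha i) ^ m i * gam' k i" by (rule iota_inj)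
  qed
  have L2: "\<forall>j<l. \<forall>j'<l. (\<Sum>k<l. G' j k * th k j') = (if j = j' then const_poly (d * d) * Q' else 0)"
  proof (intro allI impI)
    fix j j' assume j: "j < l" and j': "j' < l"
    have "iota (\<Sum>k<l. G' j k * th k j') = (\<Sum>k<l. (cd * cd) * (G j k * \<theta> k j'))"
      by (simp add: iota_sum iota_mult) (rule sum.cong, simp_all add: iG ith j j' ac_simps)
    also have "\<dots> = (cd * cd) * (if j = j' then QQ else 0)"
      using Q4 j j' by (simp add: sum_distrib_left[symmetric])
    also have "\<dots> = iota (if j = j' then const_poly (d * d) * Q' else 0)"
      by (simp add: iota_mult iota_const iQ cd_def const_poly_mult)
    finally show "(\<Sum>k<l. G' j k * th k j') = (if j = j' then const_poly (d * d) * Q' else 0)" by (rule iota_inj)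
  qed
  have L3: "\<forall>k<l. \<forall>k'<l. (\<Sum>j<l. th k j * G' j k') = (if k = k' then const_poly (d * d) * Q' else 0)"
  proof (intro allI impI)
    fix k k' assume k: "k < l" and k': "k' < l"
    have "iota (\<Sum>j<l. th k j * G' j k') = (\<Sum>j<l. (cd * cd) * (\<theta> k j * G j k'))"
      by (simp add: iota_sum iota_mult) (rule sum.cong, simp_all add: iG ith k k' ac_simps)
    also have "\<dots> = (cd * cd) * (if k = k' then QQ else 0)"
      using Q5 k k' by (simp add: sum_distrib_left[symmetric])
    also have "\<dots> = iota (if k = k' then const_poly (d * d) * Q' else 0)"
      by (simp add: iota_mult iota_const iQ cd_def const_poly_mult)
    finally show "(\<Sum>j<l. th k j * G' j k') = (if k = k' then const_poly (d * d) * Q' else 0)" by (rule iota_inj)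
  qed
  have L4: "\<forall>i<n. \<forall>j<l. \<forall>jj<l. \<forall>k<l.
        const_poly (alpha i jj) * G' j k - const_poly (alpha i j) * G' jj k = lin_form l (alpha i) ^ m i * H' i j jj k"
  proof (intro allI impI)
    fix i j jj k assume i: "i < n" and j: "j < l" and jj: "jj < l" and k: "k < l"
    have "iota (const_poly (alpha i jj) * G' j k - const_poly (alpha i j) * G' jj k) =
        cd * (const_poly (aQ i jj) * G j k - const_poly (aQ i j) * G jj k)"
      by (simp add: iota_diff iota_mult iota_const iG i j jj k aQ_def algebra_simps)
    also have "\<dots> = iota (lin_form l (alpha i) ^ m i * H' i j jj k)"
      using Q6 i j jj k by (simp add: iota_mult iota_power ialpha iH ac_simps)
    finally show "const_poly (alpha i jj) * G' j k - const_poly (alpha i j) * G' jj k = lin_form l (alpha i) ^ m i * H' i j jj k"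
      by (rule iota_inj)
  qed
  define PA where "PA = {(i, i'). i < n \<and> i' < n \<and> i \<noteq> i'}"
  have finPA: "finite PA"
    by (rule finite_subset[of _ "{..<n} \<times> {..<n}"]) (auto simp: PA_def)
  have "\<forall>x\<in>PA. \<exists>N::nat. \<forall>p>N. (\<exists>j<l. \<not> int p dvd (alpha (fst x) j - alpha (snd x) j)) \<and>
     (\<forall>c. \<not> (\<forall>j<l. int p dvd (alpha (fst x) j - c * alpha (snd x) j)))"
  proof
    fix x assume "x \<in> PA"
    then obtain i i' where x: "x = (i, i')" "i < n" "i' < n" "i \<noteq> i'" by (auto simp: PA_def)
    show "\<exists>N::nat. \<forall>p>N. (\<exists>j<l. \<not> int p dvd (alpha (fst x) j - alpha (snd x) j)) \<and>
     (\<forall>c. \<not> (\<forall>j<l. int p dvd (alpha (fst x) j - c * alpha (snd x) j)))"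
    proof -
      have dh: "\<not> (\<exists>c::rat. \<forall>j<l. of_int (alpha i j) = c * of_int (alpha i' j))" using distinct_hyps x by blast
      show ?thesis using pair_bound[where alpha=alpha and i=i and i'=i' and l=l, OF nzint[OF x(3)] dh] x(1) by simp
    qed
  qed
  then have "\<exists>N. \<forall>x\<in>PA. \<forall>p>N. (\<exists>j<l. \<not> int p dvd (alpha (fst x) j - alpha (snd x) j)) \<and>
     (\<forall>c. \<not> (\<forall>j<l. int p dvd (alpha (fst x) j - c * alpha (snd x) j)))"
    by (rule finite_bound[OF finPA])
  then obtain N0 where N0: "\<forall>x\<in>PA. \<forall>p>N0. (\<exists>j<l. \<not> int p dvd (alpha (fst x) j - alpha (snd x) j)) \<and>
     (\<forall>c. \<not> (\<forall>j<l. int p dvd (alpha (fst x) j - c * alpha (snd x) j)))"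
    by (elim exE) (erule that)
  show ?thesis
  proof (rule exI[of _ "max N0 (nat d)"], intro allI impI)
    fix p :: nat assume pp: "prime p \<and> max N0 (nat d) < p"
    then have p: "prime p" and pN0: "p > N0" and pd: "p > nat d" by auto
    have pairs: "(\<exists>j<l. \<not> int p dvd (alpha i j - alpha i' j)) \<and>
      (\<forall>c. \<not> (\<forall>j<l. int p dvd (alpha i j - c * alpha i' j)))" if "i < n" "i' < n" "i \<noteq> i'" for i i'
    proof -
      have "(i, i') \<in> PA" using that by (simp add: PA_def)
      with N0 have "\<forall>p>N0. (\<exists>j<l. \<not> int p dvd (alpha (fst (i, i')) j - alpha (snd (i, i')) j)) \<and>
        (\<forall>c. \<not> (\<forall>j<l. int p dvd (alpha (fst (i, i')) j - c * alpha (snd (i, i')) j)))" by (rule bspec)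
      then have "(\<exists>j<l. \<not> int p dvd (alpha (fst (i, i')) j - alpha (snd (i, i')) j)) \<and>
        (\<forall>c. \<not> (\<forall>j<l. int p dvd (alpha (fst (i, i')) j - c * alpha (snd (i, i')) j)))" using pN0 by blast
      then show ?thesis by simp
    qed
    have good: "good_prime p l n alpha" unfolding good_prime_def
    proof (intro allI impI)
      fix i i' assume "i < n" "i' < n" "i \<noteq> i'"
      then show "\<exists>j<l. \<not> int p dvd (alpha i j - alpha i' j)" using pairs by blast
    qed
    have hunit: "\<forall>i<n. \<exists>jj<l. \<not> int p dvd alpha i jj"
    proof (intro allI impI)
      fix i assume "i < n"
      then have "\<not> (\<forall>j<l. int p dvd alpha i j)" using primitive p by blast
      then show "\<exists>jj<l. \<not> int p dvd alpha i jj" by blast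
    qed
    have hnp: "\<forall>i<n. \<forall>i'<n. i \<noteq> i' \<longrightarrow> (\<forall>c. \<not> (\<forall>j<l. int p dvd (alpha i j - c * alpha i' j)))"
    proof (intro allI impI)
      fix i i' c assume "i < n" "i' < n" "i \<noteq> i'"
      then have "\<forall>c. \<not> (\<forall>j<l. int p dvd (alpha i j - c * alpha i' j))" using pairs by blast
      then show "\<not> (\<forall>j<l. int p dvd (alpha i j - c * alpha i' j))" by blast
    qed
    have hd: "\<not> int p dvd (d * d)"
    proof
      assume "int p dvd d * d"
      moreover have "prime (int p)" using p by simp
      ultimately have "int p dvd d" by (simp add: prime_dvd_mult_iff)
      then show False using small_not_dvd[OF dnz, of p] pd dpos by simp
    qed
    have "free_mod (zero_mod p) l n alpha m e"
      by (rule modp_free[OF p hunit hnp hd th_der th_hom L1 L2[unfolded Q'_def] L3[unfolded Q'_def] L4])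
    then have "free_multiarr_modp p l n alpha m e" by (simp add: free_multiarr_modp_def)
    then show "good_prime p l n alpha \<and> free_multiarr_modp p l n alpha m e" using good by blast
  qed
qed


end
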